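(* Let $\mathbb T$ be a syndetic time scale with $\inf\mathbb T=0$ and $\sup\mathbb T=+\infty$, let $A:\mathbb T\to\mathbb R^{n\times n}$ be bounded and rd-continuous, and suppose the system $x^\Delta=A(t)x$ is regular on $\mathbb T$. Then for any real numbers $0<\lambda<\gamma$ there exist a constant $C_{\gamma,\lambda}>0$ and a linear operator $\mathcal L_\gamma:\mathcal C_\gamma\to\mathcal C_\lambda$ such that for every rd-continuous $f\in\mathcal C_\gamma$ the function $\mathcal L_\gamma f$ is a solution of $x^\Delta=A(t)x+f(t)$ on $\mathbb T$, and $\|\mathcal L_\gamma f\|_\lambda\le C_{\gamma,\lambda}\|f\|_\gamma$.
   Context: A time scale $\mathbb T$ is a nonempty closed subset of $\mathbb R$; $\sigma(t)=\inf\{s\in\mathbb T:s>t\}$, $\mu(t)=\sigma(t)-t$ (graininess). $\mathbb T$ is syndetic if $\sup_{t\in\mathbb T}\mu(t)<+\infty$. rd-continuous: continuous at right-dense points ($\mu(t)=0$), with finite left limits at left-dense points. $x^\Delta$ is the Hilger $\Delta$-derivative. For $\kappa\in\mathbb R$, $\mathcal C_\kappa$ is the space of functions $f:\mathbb T\to\mathbb R^n$ with $\|f\|_\kappa:=\sup_{t\in\mathbb T}|f(t)|e^{\kappa t}<\infty$. For a matrix function $F$ on $\mathbb T$, $\Upsilon(F)=\limsup_{t\to\infty,\,t\in\mathbb T}\frac1t\ln\|F(t)\|$. Regularity: $x^\Delta=A(t)x$ is regular if there exist a constant real diagonal matrix $B=\mathrm{diag}(b_1,\dots,b_n)$ and a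 piecewise continuous, invertible-valued matrix function $L(t)$ on $\mathbb T$ with $\Upsilon(L)=\Upsilon(L^{-1})=0$ such that the substitution $x=L(t)y$ transforms the system into $y^\Delta=\hat B(t)y$, where $\hat B(t)=B$ if $\mu(t)=0$ and $\hat B(t)=(\exp(B\mu(t))-E)/\mu(t)$ if $\mu(t)>0$ ($E$ the identity matrix). *)

theory Defs
  imports "HOL-Analysis.Analysis" "HOL-Library.Liminf_Limsup"
begin

definition time_scale :: "real set \<Rightarrow> bool" where
  "time_scale T \<longleftrightarrow> T \<noteq> {} \<and> closed T"

definition sigma :: "real set \<Rightarrow> real \<Rightarrow> real" where
  "sigma T t = (if \<exists>s\<in>T. t < s then Inf {s\<in>T. t < s} else t)"

definition rho :: "real set \<Rightarrow> real \<Rightarrow> real" where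
  "rho T t = (if \<exists>s\<in>T. s < t then Sup {s\<in>T. s < t} else t)"

definition graininess :: "real set \<Rightarrow> real \<Rightarrow> real" where
  "graininess T t = sigma T t - t"

definition syndetic :: "real set \<Rightarrow> bool" where
  "syndetic T \<longleftrightarrow> bdd_above (graininess T ` T)"

definition right_dense :: "real set \<Rightarrow> real \<Rightarrow> bool" where
  "right_dense T t \<longleftrightarrow> graininess T t = 0"

definition left_dense :: "real set \<Rightarrow> real \<Rightarrow> bool" where
  "left_dense T t \<longleftrightarrow> (\<exists>s\<in>T. s < t) \<and> rho T t = t"

definition rd_continuous :: "real set \<Rightarrow> (real \<Rightarrow> 'a::topological_space) \<Rightarrow> bool" where
  "rd_continuous T f \<longleftrightarrow>
     (\<forall>t\<in>T. right_dense T t \<longrightarrow> continuous (at t within T) f) \<and>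
     (\<forall>t\<in>T. left_dense T t \<longrightarrow> (\<exists>l. (f \<longlongrightarrow> l) (at t within (T \<inter> {..<t}))))"

definition piecewise_continuous :: "real set \<Rightarrow> (real \<Rightarrow> 'a::topological_space) \<Rightarrow> bool" where
  "piecewise_continuous T f \<longleftrightarrow>
     (\<forall>a. finite {t\<in>T. t \<le> a \<and> \<not> continuous (at t within T) f}) \<and>
     (\<forall>t\<in>T. left_dense T t \<longrightarrow> (\<exists>l. (f \<longlongrightarrow> l) (at t within (T \<inter> {..<t})))) \<and>
     (\<forall>t\<in>T. right_dense T t \<longrightarrow> (\<exists>l. (f \<longlongrightarrow> l) (at t within (T \<inter> {t<..}))))"

definition has_delta_derivative ::
  "real set \<Rightarrow> (real \<Rightarrow> 'a::real_normed_vector) \<Rightarrow> 'a \<Rightarrow> real \<Rightarrow> bool" where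
  "has_delta_derivative T x D t \<longleftrightarrow>
     (\<forall>\<epsilon>>0. \<exists>\<delta>>0. \<forall>s\<in>T. \<bar>s - t\<bar> < \<delta> \<longrightarrow>
        norm (x (sigma T t) - x s - (sigma T t - s) *\<^sub>R D) \<le> \<epsilon> * \<bar>sigma T t - s\<bar>)"

text \<open>x is a solution of x^Delta = A(t) x + f(t) on T (T has no maximum here, so T^kappa = T).\<close>
definition solves_linear ::
  "real set \<Rightarrow> (real \<Rightarrow> real^'n^'n) \<Rightarrow> (real \<Rightarrow> real^'n) \<Rightarrow> (real \<Rightarrow> real^'n) \<Rightarrow> bool" where
  "solves_linear T A f x \<longleftrightarrow>
     (\<forall>t\<in>T. has_delta_derivative T x (A t *v x t + f t) t)"

definition weighted_norm :: "real set \<Rightarrow> real \<Rightarrow> (real \<Rightarrow> real^'n) \<Rightarrow> real" where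
  "weighted_norm T \<kappa> f = (SUP t\<in>T. norm (f t) * exp (\<kappa> * t))"

definition in_C :: "real set \<Rightarrow> real \<Rightarrow> (real \<Rightarrow> real^'n) \<Rightarrow> bool" where
  "in_C T \<kappa> f \<longleftrightarrow> bdd_above ((\<lambda>t. norm (f t) * exp (\<kappa> * t)) ` T)"

definition Upsilon :: "real set \<Rightarrow> (real \<Rightarrow> real^'n^'m) \<Rightarrow> ereal" where
  "Upsilon T F = Limsup (inf at_top (principal T)) (\<lambda>t. ereal (ln (norm (F t)) / t))"

text \<open>B-hat(t) for B = diag(b): B if mu(t)=0, (exp(B mu(t)) - E)/mu(t) otherwise
  (entrywise, since B is diagonal).\<close>
definition Bhat :: "real set \<Rightarrow> real^'n \<Rightarrow> real \<Rightarrow> real^'n^'n" where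
  "Bhat T b t = (\<chi> i j. if i = j then
       (if graininess T t = 0 then b $ i
        else (exp (b $ i * graininess T t) - 1) / graininess T t)
     else 0)"

definition regular_system :: "real set \<Rightarrow> (real \<Rightarrow> real^'n^'n) \<Rightarrow> bool" where
  "regular_system T A \<longleftrightarrow>
     (\<exists>(b::real^'n) (L::real \<Rightarrow> real^'n^'n).
        (\<forall>t\<in>T. invertible (L t)) \<and>
        piecewise_continuous T L \<and>
        Upsilon T L = 0 \<and> Upsilon T (\<lambda>t. matrix_inv (L t)) = 0 \<and>
        (\<forall>y. solves_linear T (Bhat T b) (\<lambda>_. 0) y \<longleftrightarrow>
             solves_linear T A (\<lambda>_. 0) (\<lambda>t. L t *v y t)))"

end

theory Submission
  imports Defs "HOL-Library.Function_Algebras"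
begin


locale tsc =
  fixes T :: "real set" and M :: real
  assumes closedT: "closed T" and nonneg: "\<And>t. t \<in> T \<Longrightarrow> 0 \<le> t" and zeroT: "0 \<in> T"
    and unb: "\<not> bdd_above T" and grM: "\<And>t. t \<in> T \<Longrightarrow> graininess T t \<le> M"
begin

abbreviation "\<sigma> \<equiv> sigma T"

lemma ex_gt: "\<exists>s\<in>T. t < s"
  using unb by (meson bdd_above.I linorder_not_le)

lemma sig_eq: "\<sigma> t = Inf {s\<in>T. t < s}"
  using ex_gt by (simp add: sigma_def)

lemma sig_set: "{s\<in>T. t < s} \<noteq> {}" "bdd_below {s\<in>T. t < s}"
  using ex_gt by (auto intro: bdd_belowI[of _ t])

lemma sig_in: "\<sigma> t \<in> T"
proof -
  have "Inf {s\<in>T. t < s} \<in> closure {s\<in>T. t < s}"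
    using sig_set by (rule closure_contains_Inf)
  also have "\<dots> \<subseteq> T" using closedT by (simp add: closure_minimal)
  finally show ?thesis by (simp add: sig_eq)
qed

lemma sig_ge: "t \<le> \<sigma> t"
  unfolding sig_eq using sig_set by (intro cInf_greatest) auto

lemma sig_le_pt: "s \<in> T \<Longrightarrow> t < s \<Longrightarrow> \<sigma> t \<le> s"
  unfolding sig_eq using sig_set by (intro cInf_lower) auto

lemma sig_gap: "s \<in> T \<Longrightarrow> t < s \<Longrightarrow> s < \<sigma> t \<Longrightarrow> False"
  using sig_le_pt by force

lemma sig_leM: "t \<in> T \<Longrightarrow> \<sigma> t \<le> t + M"
  using grM[of t] by (simp add: graininess_def)

lemma M_nonneg: "0 \<le> M"
  using grM[OF zeroT] sig_ge[of 0] by (simp add: graininess_def)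

lemma rd_approx: assumes "\<sigma> t = t" "e > 0" shows "\<exists>s\<in>T. t < s \<and> s < t + e"
proof -
  have "Inf {s\<in>T. t < s} < t + e" using assms sig_eq by simp
  then show ?thesis using cInf_less_iff[OF sig_set] by auto
qed

definition lft :: "real \<Rightarrow> real" where "lft u = Sup {s\<in>T. s \<le> u}"

lemma lft_set: "0 \<le> u \<Longrightarrow> {s\<in>T. s \<le> u} \<noteq> {}" "bdd_above {s\<in>T. s \<le> u}"
  using zeroT by (auto intro: bdd_aboveI[of _ u])

lemma lft_in: assumes "0 \<le> u" shows "lft u \<in> T"
proof -
  have "Sup {s\<in>T. s \<le> u} \<in> closure {s\<in>T. s \<le> u}"
    using lft_set(1)[OF assms] lft_set(2) by (rule closure_contains_Sup)
  also have "\<dots> \<subseteq> T" using closedT by (simp add: closure_minimal)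
  finally show ?thesis by (simp add: lft_def)
qed

lemma lft_le: "0 \<le> u \<Longrightarrow> lft u \<le> u"
  unfolding lft_def using lft_set[of u] by (intro cSup_least) auto

lemma lft_ge: "s \<in> T \<Longrightarrow> s \<le> u \<Longrightarrow> s \<le> lft u"
  unfolding lft_def using lft_set[of u] nonneg[of s] by (intro cSup_upper) auto

lemma lft_T: "u \<in> T \<Longrightarrow> lft u = u"
  using lft_le lft_ge nonneg by (meson order.antisym order_refl)

lemma lft_sig: assumes "0 \<le> u" "lft u < u" shows "u < \<sigma> (lft u)"
proof -
  have "\<sigma> (lft u) \<in> T" by (rule sig_in)
  have "u \<le> \<sigma> (lft u)"
  proof (rule ccontr)
    assume "\<not> u \<le> \<sigma> (lft u)"
    then have "\<sigma> (lft u) \<le> lft u" using lft_ge[OF sig_in] by simp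
    moreover have "lft u < \<sigma> (lft u)"
    proof -
      obtain s where "s \<in> T" "u < s" using ex_gt by blast
      hence "lft u < s" using assms by simp
      have "lft u \<le> \<sigma> (lft u)" by (rule sig_ge)
      moreover have "\<sigma> (lft u) \<noteq> lft u"
      proof
        assume e: "\<sigma> (lft u) = lft u"
        obtain s where "s\<in>T" "lft u < s" "s < lft u + (u - lft u)"
          using rd_approx[OF e, of "u - lft u"] assms by auto
        thus False using lft_ge[of s u] by simp
      qed
      ultimately show ?thesis by simp
    qed
    ultimately show False by simp
  qed
  moreover have "u \<noteq> \<sigma> (lft u)" using lft_T[of u] sig_in[of "lft u"] assms by force
  ultimately show ?thesis by simp
qed

lemma lft_geM: assumes "0 \<le> u" shows "u - M \<le> lft u"
proof (cases "lft u < u")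
  case True
  then show ?thesis using lft_sig[OF assms True] sig_leM[OF lft_in[OF assms]] by simp
next
  case False
  then show ?thesis using M_nonneg by simp
qed

lemma lft_mono: "0 \<le> u \<Longrightarrow> u \<le> v \<Longrightarrow> lft u \<le> lft v"
  using lft_ge[OF lft_in] lft_le by (meson order_trans)

end


lemma le_eps_zero: fixes a c :: real assumes "\<And>e. e > 0 \<Longrightarrow> a \<le> e * c" "0 \<le> c" shows "a \<le> 0"
proof (rule ccontr)
  assume "\<not> a \<le> 0"
  hence a: "a > 0" by simp
  have "a \<le> (a / (2*(c+1))) * c" using assms(1)[of "a/(2*(c+1))"] a assms(2) by simp
  also have "\<dots> < a" using a assms(2) by (simp add: field_simps add_nonneg_pos)
  finally show False by simp
qed

context tsc begin

lemma dd_step: assumes "has_delta_derivative T x D t" "t \<in> T"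
  shows "x (\<sigma> t) - x t = (\<sigma> t - t) *\<^sub>R D"
proof -
  have "norm (x (\<sigma> t) - x t - (\<sigma> t - t) *\<^sub>R D) \<le> 0"
  proof (rule le_eps_zero)
    fix e :: real assume "e > 0"
    then obtain d where "d > 0" "\<forall>s\<in>T. \<bar>s - t\<bar> < d \<longrightarrow>
        norm (x (\<sigma> t) - x s - (\<sigma> t - s) *\<^sub>R D) \<le> e * \<bar>\<sigma> t - s\<bar>"
      using assms(1) unfolding has_delta_derivative_def by blast
    then show "norm (x (\<sigma> t) - x t - (\<sigma> t - t) *\<^sub>R D) \<le> e * \<bar>\<sigma> t - t\<bar>"
      using assms(2) by auto
  qed simp
  then show ?thesis by simp
qed

lemma dd_cont: assumes "has_delta_derivative T x D t" "t \<in> T"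
  shows "continuous (at t within T) x"
  unfolding continuous_within_eps_delta
proof (intro allI impI)
  fix e :: real assume e: "e > 0"
  define \<mu> where "\<mu> = \<sigma> t - t"
  have mu: "\<mu> \<ge> 0" using sig_ge[of t] by (simp add: \<mu>_def)
  define \<epsilon> where "\<epsilon> = e / (2 * (\<mu> + 1))"
  have eps: "\<epsilon> > 0" using e mu by (simp add: \<epsilon>_def)
  obtain d where d: "d > 0" "\<forall>s\<in>T. \<bar>s - t\<bar> < d \<longrightarrow>
        norm (x (\<sigma> t) - x s - (\<sigma> t - s) *\<^sub>R D) \<le> \<epsilon> * \<bar>\<sigma> t - s\<bar>"
    using assms(1) eps unfolding has_delta_derivative_def by blast
  define d' where "d' = min d (min 1 (e / (2 * (\<epsilon> + norm D + 1))))"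
  have "0 < 2 * (\<epsilon> + norm D + 1)" using eps norm_ge_zero[of D] by (smt (verit))
  hence d'pos: "d' > 0" using d e eps by (simp add: d'_def)
  show "\<exists>d>0. \<forall>x'\<in>T. dist x' t < d \<longrightarrow> dist (x x') (x t) < e"
  proof (intro exI[of _ d'] conjI ballI impI d'pos)
    fix s assume s: "s \<in> T" "dist s t < d'"
    have st: "\<bar>s - t\<bar> < d'" using s by (simp add: dist_real_def)
    have st1: "\<bar>s - t\<bar> < 1" "\<bar>s - t\<bar> < e / (2 * (\<epsilon> + norm D + 1))" using st by (auto simp: d'_def)
    have step: "x (\<sigma> t) - x t = (\<sigma> t - t) *\<^sub>R D" by (rule dd_step[OF assms])
    have eq: "x s - x t = - (x (\<sigma> t) - x s - (\<sigma> t - s) *\<^sub>R D) + (s - t) *\<^sub>R D"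
      using step by (simp add: algebra_simps)
    have "norm (x s - x t) \<le> norm (x (\<sigma> t) - x s - (\<sigma> t - s) *\<^sub>R D) + \<bar>s - t\<bar> * norm D"
      unfolding eq by (metis norm_minus_cancel norm_scaleR norm_triangle_ineq)
    also have "\<dots> \<le> \<epsilon> * \<bar>\<sigma> t - s\<bar> + \<bar>s - t\<bar> * norm D"
      using d(2) s(1) st d'_def by auto
    also have "\<bar>\<sigma> t - s\<bar> \<le> \<mu> + \<bar>s - t\<bar>" using sig_ge[of t] by (simp add: \<mu>_def)
    hence "\<epsilon> * \<bar>\<sigma> t - s\<bar> \<le> \<epsilon> * (\<mu> + \<bar>s - t\<bar>)" using eps by (intro mult_left_mono) auto
    hence "\<epsilon> * \<bar>\<sigma> t - s\<bar> + \<bar>s - t\<bar> * norm D \<le> \<epsilon> * \<mu> + \<bar>s - t\<bar> * (\<epsilon> + norm D)"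
      by (simp add: algebra_simps)
    also have "\<epsilon> * \<mu> < e / 2" using e mu by (simp add: \<epsilon>_def field_simps)
    also have "\<bar>s - t\<bar> * (\<epsilon> + norm D) \<le> e / (2 * (\<epsilon> + norm D + 1)) * (\<epsilon> + norm D)"
      using st1 eps by (intro mult_right_mono) auto
    also have "\<dots> = (e / 2) * ((\<epsilon> + norm D) / (\<epsilon> + norm D + 1))" by simp
    also have "\<dots> \<le> (e / 2) * 1"
    proof (intro mult_left_mono)
      have "0 \<le> \<epsilon> + norm D" using eps norm_ge_zero[of D] by (smt (verit))
      then show "(\<epsilon> + norm D) / (\<epsilon> + norm D + 1) \<le> 1" by (simp add: divide_le_eq_1)
    qed (use e in auto)
    also have "\<dots> = e / 2" by simp
    finally show "dist (x s) (x t) < e" by (simp add: dist_norm)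
  qed
qed

lemma dd_rd: assumes "has_delta_derivative T x D t" "t \<in> T" "\<sigma> t = t"
  shows "(x has_vector_derivative D) (at t within T)"
  unfolding has_vector_derivative_def has_derivative_within_alt
proof (intro conjI allI impI)
  show "bounded_linear (\<lambda>h. h *\<^sub>R D)" by (rule bounded_linear_scaleR_left)
  fix e :: real assume "e > 0"
  then obtain d where d: "d > 0" "\<forall>s\<in>T. \<bar>s - t\<bar> < d \<longrightarrow>
        norm (x (\<sigma> t) - x s - (\<sigma> t - s) *\<^sub>R D) \<le> e * \<bar>\<sigma> t - s\<bar>"
    using assms(1) unfolding has_delta_derivative_def by blast
  show "\<exists>d>0. \<forall>y\<in>T. norm (y - t) < d \<longrightarrow> norm (x y - x t - (y - t) *\<^sub>R D) \<le> e * norm (y - t)"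
  proof (intro exI[of _ d] conjI ballI impI d(1))
    fix y assume "y \<in> T" "norm (y - t) < d"
    then have "norm (x t - x y - (t - y) *\<^sub>R D) \<le> e * \<bar>t - y\<bar>" using d(2) assms(3) by auto
    moreover have e1: "x t - x y - (t - y) *\<^sub>R D = - (x y - x t - (y - t) *\<^sub>R D)" by (simp add: algebra_simps)
    ultimately show "norm (x y - x t - (y - t) *\<^sub>R D) \<le> e * norm (y - t)"
      by (simp only: e1 norm_minus_cancel abs_minus_commute real_norm_def)
  qed
qed

lemma dd_of_rd: assumes "(x has_vector_derivative D) (at t within T)" "\<sigma> t = t"
  shows "has_delta_derivative T x D t"
  unfolding has_delta_derivative_def
proof (intro allI impI)
  fix e :: real assume "e > 0"
  then obtain d where d: "d > 0" "\<forall>y\<in>T. norm (y - t) < d \<longrightarrow> norm (x y - x t - (y - t) *\<^sub>R D) \<le> e * norm (y - t)"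
    using assms(1) unfolding has_vector_derivative_def has_derivative_within_alt by blast
  show "\<exists>d>0. \<forall>s\<in>T. \<bar>s - t\<bar> < d \<longrightarrow> norm (x (\<sigma> t) - x s - (\<sigma> t - s) *\<^sub>R D) \<le> e * \<bar>\<sigma> t - s\<bar>"
  proof (intro exI[of _ d] conjI ballI impI d(1))
    fix s assume "s \<in> T" "\<bar>s - t\<bar> < d"
    then have "norm (x s - x t - (s - t) *\<^sub>R D) \<le> e * \<bar>s - t\<bar>" using d(2) by auto
    moreover have e1: "x s - x t - (s - t) *\<^sub>R D = - (x t - x s - (t - s) *\<^sub>R D)" by (simp add: algebra_simps)
    ultimately show "norm (x (\<sigma> t) - x s - (\<sigma> t - s) *\<^sub>R D) \<le> e * \<bar>\<sigma> t - s\<bar>"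
      using assms(2) by (simp only: e1 norm_minus_cancel abs_minus_commute)
  qed
qed

lemma dd_of_rs: assumes "continuous (at t within T) x" "t < \<sigma> t"
    "x (\<sigma> t) - x t = (\<sigma> t - t) *\<^sub>R D" "t \<in> T"
  shows "has_delta_derivative T x D t"
  unfolding has_delta_derivative_def
proof (intro allI impI)
  fix e :: real assume e: "e > 0"
  define \<mu> where "\<mu> = \<sigma> t - t"
  have mu: "\<mu> > 0" using assms(2) by (simp add: \<mu>_def)
  obtain d1 where d1: "d1 > 0" "\<forall>s\<in>T. dist s t < d1 \<longrightarrow> dist (x s) (x t) < e * \<mu> / 2"
    using assms(1) e mu unfolding continuous_within_eps_delta by (metis half_gt_zero mult_pos_pos)
  define d where "d = min d1 (min \<mu> (e * \<mu> / (2 * (norm D + 1))))"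
  have "0 < 2 * (norm D + 1)" using norm_ge_zero[of D] by (smt (verit))
  hence dpos: "d > 0" using d1 mu e by (simp add: d_def)
  show "\<exists>d>0. \<forall>s\<in>T. \<bar>s - t\<bar> < d \<longrightarrow> norm (x (\<sigma> t) - x s - (\<sigma> t - s) *\<^sub>R D) \<le> e * \<bar>\<sigma> t - s\<bar>"
  proof (intro exI[of _ d] conjI ballI impI dpos)
    fix s assume s: "s \<in> T" "\<bar>s - t\<bar> < d"
    have "s \<le> t"
    proof (rule ccontr)
      assume "\<not> s \<le> t"
      hence "t < s" "s < \<sigma> t" using s by (auto simp: d_def \<mu>_def)
      thus False using sig_gap s(1) by blast
    qed
    have eq: "x (\<sigma> t) - x s - (\<sigma> t - s) *\<^sub>R D = (x t - x s) - (t - s) *\<^sub>R D"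
      using assms(3) by (simp add: algebra_simps)
    have "norm (x (\<sigma> t) - x s - (\<sigma> t - s) *\<^sub>R D) \<le> norm (x t - x s) + \<bar>t - s\<bar> * norm D"
      unfolding eq by (metis norm_scaleR norm_triangle_ineq4)
    also have "norm (x t - x s) \<le> e * \<mu> / 2"
      using d1(2) s by (auto simp: dist_norm d_def norm_minus_commute less_imp_le)
    also have "\<bar>t - s\<bar> * norm D \<le> e * \<mu> / (2 * (norm D + 1)) * norm D"
      using s by (intro mult_right_mono) (auto simp: d_def)
    also have "\<dots> = (e * \<mu> / 2) * (norm D / (norm D + 1))" by simp
    also have "\<dots> \<le> (e * \<mu> / 2) * 1"
    proof (intro mult_left_mono)
      have "0 < norm D + 1" using norm_ge_zero[of D] by (smt (verit))
      then show "norm D / (norm D + 1) \<le> 1" by (simp add: divide_le_eq_1)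
    qed (use e mu in auto)
    also have "\<dots> = e * \<mu> / 2" by simp
    also have "e * \<mu> / 2 + e * \<mu> / 2 \<le> e * \<bar>\<sigma> t - s\<bar>"
      using \<open>s \<le> t\<close> e by (simp add: \<mu>_def)
    finally show "norm (x (\<sigma> t) - x s - (\<sigma> t - s) *\<^sub>R D) \<le> e * \<bar>\<sigma> t - s\<bar>" by simp
  qed
qed

lemma dd_iff: assumes "t \<in> T"
  shows "has_delta_derivative T x D t \<longleftrightarrow>
    (if \<sigma> t = t then (x has_vector_derivative D) (at t within T)
     else continuous (at t within T) x \<and> x (\<sigma> t) - x t = (\<sigma> t - t) *\<^sub>R D)"
proof (cases "\<sigma> t = t")
  case True
  then show ?thesis using dd_rd dd_of_rd assms by auto
next
  case False
  hence "t < \<sigma> t" using sig_ge[of t] by simp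
  then show ?thesis using False dd_of_rs[of t x D] dd_cont[of x D t] dd_step[of x D t] assms by auto
qed

end


lemma norm_mv: fixes A :: "real^'n^'m" shows "norm (A *v x) \<le> norm A * norm x"
proof -
  have c: "norm ((A *v x) $ i) \<le> norm (A $ i) * norm x" for i
  proof -
    have "(A *v x) $ i = inner (A $ i) x"
      by (simp add: matrix_vector_mult_def inner_vec_def)
    then show ?thesis by (simp add: Cauchy_Schwarz_ineq2)
  qed
  have "norm (A *v x) = L2_set (\<lambda>i. norm ((A *v x) $ i)) UNIV" by (simp add: norm_vec_def)
  also have "\<dots> \<le> L2_set (\<lambda>i. norm x * norm (A $ i)) UNIV"
    using c by (intro L2_set_mono) (auto simp: mult.commute)
  also have "\<dots> = norm x * L2_set (\<lambda>i. norm (A $ i)) UNIV"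
    by (simp add: L2_set_right_distrib)
  also have "\<dots> = norm A * norm x" by (simp add: norm_vec_def)
  finally show ?thesis .
qed

context tsc begin

lemma sig_cont: assumes "t \<in> T" "\<sigma> t = t" shows "continuous (at t within T) \<sigma>"
  unfolding continuous_within_eps_delta
proof (intro allI impI)
  fix e :: real assume e: "e > 0"
  obtain u where u: "u \<in> T" "t < u" "u < t + e" using rd_approx[OF assms(2) e] by blast
  show "\<exists>d>0. \<forall>s\<in>T. dist s t < d \<longrightarrow> dist (\<sigma> s) (\<sigma> t) < e"
  proof (intro exI[of _ "min e (u - t)"] conjI ballI impI)
    show "0 < min e (u - t)" using e u by simp
    fix s assume s: "s \<in> T" "dist s t < min e (u - t)"
    show "dist (\<sigma> s) (\<sigma> t) < e"
    proof (cases "s < t")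
      case True
      then have "\<sigma> s \<le> t" using sig_le_pt[OF assms(1)] by blast
      then show ?thesis using sig_ge[of s] s assms(2) by (auto simp: dist_real_def)
    next
      case False
      then have "s < u" using s by (auto simp: dist_real_def)
      then have "\<sigma> s \<le> u" using sig_le_pt[OF u(1)] by blast
      then show ?thesis using sig_ge[of s] False u assms(2) by (auto simp: dist_real_def)
    qed
  qed
qed

definition hatc :: "real \<Rightarrow> real \<Rightarrow> real" where
  "hatc \<beta> t = (if graininess T t = 0 then \<beta> else (exp (\<beta> * graininess T t) - 1) / graininess T t)"

lemma exp_dd: assumes "t \<in> T"
  shows "has_delta_derivative T (\<lambda>t. exp (\<beta> * t)) (hatc \<beta> t * exp (\<beta> * t)) t"
proof (cases "\<sigma> t = t")
  case True
  have "((\<lambda>t. exp (\<beta> * t)) has_real_derivative (exp (\<beta> * t) * \<beta>)) (at t within T)"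
    by (auto intro!: derivative_eq_intros)
  then have "((\<lambda>t. exp (\<beta> * t)) has_vector_derivative (hatc \<beta> t * exp (\<beta> * t))) (at t within T)"
    using True by (simp add: has_real_derivative_iff_has_vector_derivative hatc_def graininess_def mult.commute)
  then show ?thesis using dd_of_rd True by blast
next
  case False
  have "t < \<sigma> t" using False sig_ge[of t] by simp
  moreover have "continuous (at t within T) (\<lambda>t. exp (\<beta> * t))" by (intro continuous_intros)
  moreover have "exp (\<beta> * \<sigma> t) - exp (\<beta> * t) = (\<sigma> t - t) *\<^sub>R (hatc \<beta> t * exp (\<beta> * t))"
  proof -
    have "exp (\<beta> * \<sigma> t) = exp (\<beta> * t) * exp (\<beta> * (\<sigma> t - t))"
      by (simp add: exp_add[symmetric] algebra_simps)
    then show ?thesis using False by (simp add: hatc_def graininess_def field_simps)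
  qed
  ultimately show ?thesis using dd_of_rs assms by blast
qed

lemma dd_scale_vec: assumes "has_delta_derivative T g D t"
  shows "has_delta_derivative T (\<lambda>t. g t *\<^sub>R v) (D *\<^sub>R v) t"
  unfolding has_delta_derivative_def
proof (intro allI impI)
  fix e :: real assume e: "e > 0"
  then have "e / (norm v + 1) > 0" by (simp add: add_nonneg_pos)
  then obtain d where d: "d > 0" "\<forall>s\<in>T. \<bar>s - t\<bar> < d \<longrightarrow>
        norm (g (\<sigma> t) - g s - (\<sigma> t - s) *\<^sub>R D) \<le> e / (norm v + 1) * \<bar>\<sigma> t - s\<bar>"
    using assms unfolding has_delta_derivative_def by blast
  show "\<exists>d>0. \<forall>s\<in>T. \<bar>s - t\<bar> < d \<longrightarrow>
       norm (g (\<sigma> t) *\<^sub>R v - g s *\<^sub>R v - (\<sigma> t - s) *\<^sub>R D *\<^sub>R v) \<le> e * \<bar>\<sigma> t - s\<bar>"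
  proof (intro exI[of _ d] conjI ballI impI d(1))
    fix s assume s: "s \<in> T" "\<bar>s - t\<bar> < d"
    have "g (\<sigma> t) *\<^sub>R v - g s *\<^sub>R v - (\<sigma> t - s) *\<^sub>R D *\<^sub>R v = (g (\<sigma> t) - g s - (\<sigma> t - s) *\<^sub>R D) *\<^sub>R v"
      by (simp add: algebra_simps)
    then have "norm (g (\<sigma> t) *\<^sub>R v - g s *\<^sub>R v - (\<sigma> t - s) *\<^sub>R D *\<^sub>R v)
       = norm (g (\<sigma> t) - g s - (\<sigma> t - s) *\<^sub>R D) * norm v" by simp
    also have "\<dots> \<le> e / (norm v + 1) * \<bar>\<sigma> t - s\<bar> * norm v"
      using d(2) s by (intro mult_right_mono) auto
    also have "\<dots> = e * \<bar>\<sigma> t - s\<bar> * (norm v / (norm v + 1))" by simp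
    also have "\<dots> \<le> e * \<bar>\<sigma> t - s\<bar> * 1"
    proof (intro mult_left_mono)
      have "0 < norm v + 1" using norm_ge_zero[of v] by (smt (verit))
      then show "norm v / (norm v + 1) \<le> 1" by (simp add: divide_le_eq_1)
    qed (use e in auto)
    finally show "norm (g (\<sigma> t) *\<^sub>R v - g s *\<^sub>R v - (\<sigma> t - s) *\<^sub>R D *\<^sub>R v) \<le> e * \<bar>\<sigma> t - s\<bar>" by simp
  qed
qed

end


lemma const_isCont: assumes "open S" "u \<in> S" "\<And>v. v \<in> S \<Longrightarrow> f v = f u" shows "isCont f u"
proof -
  have "continuous_on S (\<lambda>_. f u)" by simp
  then have "continuous_on S f" using continuous_on_cong[of S S f "\<lambda>_. f u"] assms(3) by simp
  then show ?thesis using continuous_on_eq_continuous_at[OF assms(1)] assms(2) by blast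
qed

lemma int_dev_bound:
  fixes F :: "real \<Rightarrow> real"
  assumes "a \<le> b" "F integrable_on {a..b}" "\<And>v. v \<in> {a..b} \<Longrightarrow> \<bar>F v - c\<bar> \<le> e"
  shows "\<bar>integral {a..b} F - (b - a) * c\<bar> \<le> e * (b - a)"
proof -
  have e: "0 \<le> e" using assms(3)[of a] assms(1) by auto
  have i: "(\<lambda>v. F v - c) integrable_on {a..b}" using assms(2) by (intro integrable_diff) auto
  have "integral {a..b} (\<lambda>v. F v - c) = integral {a..b} F - integral {a..b} (\<lambda>v. c)"
    by (rule integral_diff[OF assms(2) integrable_const_ivl])
  also have "\<dots> = integral {a..b} F - (b - a) * c" using assms(1) by (simp add: content_real)
  finally have "integral {a..b} (\<lambda>v. F v - c) = integral {a..b} F - (b - a) * c" .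
  moreover have "norm (integral {a..b} (\<lambda>v. F v - c)) \<le> e * (b - a)"
    using has_integral_bound[OF e, of "\<lambda>v. F v - c" "integral {a..b} (\<lambda>v. F v - c)" a b] i assms(3) assms(1)
    by (simp add: integrable_integral)
  ultimately show ?thesis using assms(1) by (simp add: content_real)
qed

context tsc begin

definition Hx :: "(real \<Rightarrow> real) \<Rightarrow> real \<Rightarrow> real" where "Hx h u = h (lft u)"

definition "RS = {t\<in>T. t < \<sigma> t}"
definition "LS = {t\<in>T. \<exists>e>0. \<forall>s\<in>T. \<not> (t - e < s \<and> s < t)}"

lemma countable_RS: "countable RS"
proof -
  have "\<forall>t\<in>RS. \<exists>r\<in>\<rat>. t < r \<and> r < \<sigma> t" using Rats_dense_in_real by (auto simp: RS_def)
  then obtain q where q: "\<forall>t\<in>RS. q t \<in> \<rat> \<and> t < q t \<and> q t < \<sigma> t" by metis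
  have "inj_on q RS"
  proof (rule inj_onI)
    fix x y assume xy: "x \<in> RS" "y \<in> RS" "q x = q y"
    have *: False if "a \<in> RS" "b \<in> RS" "a < b" "q a = q b" for a b
    proof -
      have "\<sigma> a \<le> b" using sig_le_pt that by (auto simp: RS_def)
      moreover have "q a < \<sigma> a" "b < q b" using q that by auto
      ultimately show False using that by linarith
    qed
    show "x = y"
    proof (rule ccontr)
      assume "x \<noteq> y"
      then consider "x < y" | "y < x" by linarith
      then show False
      proof cases
        case 1 show False by (rule *[OF xy(1) xy(2) 1 xy(3)])
      next
        case 2 show False by (rule *[OF xy(2) xy(1) 2 xy(3)[symmetric]])
      qed
    qed
  qed
  moreover have "q ` RS \<subseteq> \<rat>" using q by auto
  ultimately show ?thesis by (meson countable_image_inj_on countable_rat countable_subset)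
qed

lemma countable_LS: "countable LS"
proof -
  have "\<forall>t\<in>LS. \<exists>r\<in>\<rat>. r < t \<and> (\<forall>s\<in>T. \<not> (r < s \<and> s < t))"
  proof
    fix t assume "t \<in> LS"
    then obtain e where e: "e > 0" "\<forall>s\<in>T. \<not> (t - e < s \<and> s < t)" by (auto simp: LS_def)
    obtain r where "r \<in> \<rat>" "t - e < r" "r < t" using Rats_dense_in_real[of "t - e" t] e by auto
    then show "\<exists>r\<in>\<rat>. r < t \<and> (\<forall>s\<in>T. \<not> (r < s \<and> s < t))" using e by force
  qed
  then obtain q where q: "\<forall>t\<in>LS. q t \<in> \<rat> \<and> q t < t \<and> (\<forall>s\<in>T. \<not> (q t < s \<and> s < t))" by metis
  have "inj_on q LS"
  proof (rule inj_onI)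
    fix x y assume xy: "x \<in> LS" "y \<in> LS" "q x = q y"
    have *: False if "a \<in> LS" "b \<in> LS" "a < b" "q a = q b" for a b
    proof -
      have "a \<in> T" using that by (auto simp: LS_def)
      then have "a \<le> q b" using q that by force
      then show False using q that by force
    qed
    show "x = y"
    proof (rule ccontr)
      assume "x \<noteq> y"
      then consider "x < y" | "y < x" by linarith
      then show False
      proof cases
        case 1 show False by (rule *[OF xy(1) xy(2) 1 xy(3)])
      next
        case 2 show False by (rule *[OF xy(2) xy(1) 2 xy(3)[symmetric]])
      qed
    qed
  qed
  moreover have "q ` LS \<subseteq> \<rat>" using q by auto
  ultimately show ?thesis by (meson countable_image_inj_on countable_rat countable_subset)
qed

lemma Hx_cont:
  assumes hc: "\<And>t. t \<in> T \<Longrightarrow> \<sigma> t = t \<Longrightarrow> continuous (at t within T) h"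
  shows "continuous_on (- ({0} \<union> RS \<union> LS)) (Hx h)"
proof (rule continuous_at_imp_continuous_on, intro ballI)
  fix u assume u: "u \<in> - ({0} \<union> RS \<union> LS)"
  consider "u < 0" | "0 < u" "u \<notin> T" | "u \<in> T" using u by force
  then show "isCont (Hx h) u"
  proof cases
    case 1
    have eq: "Hx h v = Hx h u" if "v \<in> {..<0}" for v
    proof -
      have e: "{s\<in>T. s \<le> v} = {}" "{s\<in>T. s \<le> u} = {}" using nonneg that 1 by force+
      show ?thesis by (simp only: Hx_def lft_def e)
    qed
    show ?thesis by (rule const_isCont[where S="{..<0}" and f="Hx h" and u=u, OF _ _ eq]) (use 1 in auto)
  next
    case 2
    have l1: "lft u \<le> u" "lft u \<in> T" using 2 lft_le[of u] lft_in[of u] by auto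
    have lu: "lft u < u" using l1 2 by (cases "lft u = u") auto
    have su: "u < \<sigma> (lft u)" using lft_sig[of u] lu 2 by simp
    have eq: "Hx h v = Hx h u" if v: "v \<in> {lft u <..< \<sigma> (lft u)}" for v
    proof -
      have v0: "0 \<le> v" using v nonneg[OF lft_in[of u]] 2 by simp
      have "lft u \<le> lft v" using lft_ge[OF lft_in[of u]] v 2 by simp
      moreover have "lft v \<le> lft u"
      proof (rule ccontr)
        assume "\<not> lft v \<le> lft u"
        then have "lft u < lft v" "lft v < \<sigma> (lft u)" using lft_le[OF v0] v by auto
        then show False using sig_gap[OF lft_in[OF v0]] by blast
      qed
      ultimately show ?thesis by (simp add: Hx_def)
    qed
    show ?thesis by (rule const_isCont[where S="{lft u <..< \<sigma> (lft u)}" and f="Hx h" and u=u, OF _ _ eq]) (use lu su in auto)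
  next
    case 3
    have u0: "0 < u" using u nonneg[OF 3] by force
    have rd: "\<sigma> u = u" using u 3 sig_ge[of u] by (auto simp: RS_def)
    have nls: "\<forall>e>0. \<exists>s\<in>T. u - e < s \<and> s < u" using u 3 by (auto simp: LS_def)
    show ?thesis unfolding continuous_within_eps_delta
    proof (intro allI impI)
      fix e :: real assume e: "e > 0"
      obtain d0 where d0: "d0 > 0" "\<forall>s\<in>T. dist s u < d0 \<longrightarrow> dist (h s) (h u) < e"
        using hc[OF 3 rd] e unfolding continuous_within_eps_delta by blast
      obtain s1 where s1: "s1 \<in> T" "u - d0 < s1" "s1 < u" using nls d0 by blast
      obtain s2 where s2: "s2 \<in> T" "u < s2" "s2 < u + d0" using rd_approx[OF rd d0(1)] by blast
      show "\<exists>d>0. \<forall>v\<in>UNIV. dist v u < d \<longrightarrow> dist (Hx h v) (Hx h u) < e"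
      proof (intro exI[of _ "min (u - s1) (s2 - u)"] conjI ballI impI)
        show "0 < min (u - s1) (s2 - u)" using s1 s2 by simp
        fix v assume "dist v u < min (u - s1) (s2 - u)"
        then have v: "s1 < v" "v < s2" by (auto simp: dist_real_def)
        have v0: "0 \<le> v" using v nonneg[OF s1(1)] by simp
        have "s1 \<le> lft v" using lft_ge[OF s1(1)] v by simp
        moreover have "lft v < s2" using lft_le[OF v0] v by simp
        ultimately have "dist (lft v) u < d0" using s1 s2 by (auto simp: dist_real_def)
        then show "dist (Hx h v) (Hx h u) < e" using d0(2) lft_in[OF v0] lft_T[OF 3]
          by (simp add: Hx_def)
      qed
    qed
  qed
qed

lemma Hx_meas:
  assumes "\<And>t. t \<in> T \<Longrightarrow> \<sigma> t = t \<Longrightarrow> continuous (at t within T) h"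
  shows "Hx h \<in> borel_measurable (lebesgue_on S)"
proof -
  have "countable ({0} \<union> RS \<union> LS)" using countable_RS countable_LS by simp
  then have "Hx h \<in> borel_measurable borel"
    using borel_measurable_continuous_countable_exceptions Hx_cont[OF assms] by blast
  then show ?thesis by (simp add: measurable_completion measurable_restrict_space1)
qed

lemma Hx_bound:
  assumes hb: "\<And>t. t \<in> T \<Longrightarrow> \<bar>h t\<bar> \<le> B * exp (- \<kappa> * t)" and u: "0 \<le> u"
  shows "\<bar>Hx h u\<bar> \<le> (B * exp (\<bar>\<kappa>\<bar> * M)) * exp (- \<kappa> * u)"
proof -
  have "\<bar>h 0\<bar> \<le> B" using hb[OF zeroT] by simp
  then have B: "0 \<le> B" by linarith
  have l: "u - M \<le> lft u" "lft u \<le> u" using lft_geM[OF u] lft_le[OF u] by auto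
  have "- \<kappa> * lft u \<le> \<bar>\<kappa>\<bar> * M + - \<kappa> * u"
  proof -
    have "\<kappa> * (u - lft u) \<le> \<bar>\<kappa>\<bar> * M"
    proof -
      have "\<kappa> * (u - lft u) \<le> \<bar>\<kappa>\<bar> * (u - lft u)" using l by (intro mult_right_mono) auto
      also have "\<dots> \<le> \<bar>\<kappa>\<bar> * M" using l by (intro mult_left_mono) auto
      finally show ?thesis .
    qed
    then show ?thesis by (simp add: algebra_simps)
  qed
  then have "exp (- \<kappa> * lft u) \<le> exp (\<bar>\<kappa>\<bar> * M) * exp (- \<kappa> * u)"
    by (simp add: exp_add[symmetric])
  then have "B * exp (- \<kappa> * lft u) \<le> B * (exp (\<bar>\<kappa>\<bar> * M) * exp (- \<kappa> * u))"
    using B by (intro mult_left_mono) auto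
  then show ?thesis using hb[OF lft_in[OF u]] by (simp add: Hx_def mult.assoc)
qed

end

context tsc begin
definition G :: "(real \<Rightarrow> real) \<Rightarrow> real \<Rightarrow> real" where "G h t = integral {0..t} (Hx h)"
end

locale antid = tsc T M for T M +
  fixes h :: "real \<Rightarrow> real" and B \<kappa> :: real
  assumes hc: "\<And>t. t \<in> T \<Longrightarrow> sigma T t = t \<Longrightarrow> continuous (at t within T) h"
    and hb: "\<And>t. t \<in> T \<Longrightarrow> \<bar>h t\<bar> \<le> B * exp (- \<kappa> * t)"
begin


lemma Hx_absint:
  assumes S: "S \<subseteq> {0..}" "S \<in> sets lebesgue" "(\<lambda>u. exp (- \<kappa> * u)) integrable_on S"
  shows "Hx h absolutely_integrable_on S"
proof (rule measurable_bounded_by_integrable_imp_absolutely_integrable)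
  show "Hx h \<in> borel_measurable (lebesgue_on S)" by (rule Hx_meas[OF hc])
  show "S \<in> sets lebesgue" by fact
  show "(\<lambda>u. (B * exp (\<bar>\<kappa>\<bar> * M)) * exp (- \<kappa> * u)) integrable_on S"
    using integrable_on_cmult_left[OF S(3), of "B * exp (\<bar>\<kappa>\<bar> * M)"] by simp
  show "norm (Hx h x) \<le> (B * exp (\<bar>\<kappa>\<bar> * M)) * exp (- \<kappa> * x)" if "x \<in> S" for x
    using Hx_bound[OF hb] S(1) that by auto
qed

lemma Hx_int_ab:
  assumes a: "0 \<le> a"
  shows "Hx h integrable_on {a..b}"
proof -
  have "(\<lambda>u. exp (- \<kappa> * u)) integrable_on {a..b}"
    by (intro integrable_continuous_interval continuous_intros)
  then have "Hx h absolutely_integrable_on {a..b}" using a by (intro Hx_absint) auto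
  then show ?thesis using absolutely_integrable_on_def by blast
qed

lemma Hx_int_inf:
  assumes a: "0 \<le> a" and k: "\<kappa> > 0"
  shows "Hx h integrable_on {a..}"
proof -
  have "(\<lambda>u. exp (- \<kappa> * u)) integrable_on {a..}"
    using integrable_on_exp_minus_to_infinity[OF k] by simp
  then have "Hx h absolutely_integrable_on {a..}" using a by (intro Hx_absint) auto
  then show ?thesis using absolutely_integrable_on_def by blast
qed

lemma G_diff:
  assumes st: "0 \<le> s" "s \<le> t"
  shows "G h t - G h s = integral {s..t} (Hx h)"
  using Henstock_Kurzweil_Integration.integral_combine[OF st Hx_int_ab[of 0 t]] by (simp add: G_def)

lemma G_dd:
  assumes t: "t \<in> T"
  shows "has_delta_derivative T (G h) (h t) t"
proof (cases "\<sigma> t = t")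
  case True
  show ?thesis unfolding has_delta_derivative_def
  proof (intro allI impI)
    fix e :: real assume e: "e > 0"
    obtain d0 where d0: "d0 > 0" "\<forall>s\<in>T. dist s t < d0 \<longrightarrow> dist (h s) (h t) < e"
      using hc[OF t True] e unfolding continuous_within_eps_delta by blast
    show "\<exists>d>0. \<forall>s\<in>T. \<bar>s - t\<bar> < d \<longrightarrow> norm (G h (\<sigma> t) - G h s - (\<sigma> t - s) *\<^sub>R h t) \<le> e * \<bar>\<sigma> t - s\<bar>"
    proof (intro exI[of _ d0] conjI ballI impI d0(1))
      fix s assume s: "s \<in> T" "\<bar>s - t\<bar> < d0"
      have s0: "0 \<le> s" "0 \<le> t" using nonneg s t by auto
      have close: "\<bar>Hx h v - h t\<bar> \<le> e" if "min s t \<le> v" "v \<le> max s t" for v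
      proof -
        have v0: "0 \<le> v" using that s0 by linarith
        have "min s t \<le> lft v" using lft_ge[of "min s t" v] that s t by (simp add: min_def)
        moreover have "lft v \<le> max s t" using lft_le[OF v0] that by simp
        ultimately have "dist (lft v) t < d0" using s by (auto simp: dist_real_def min_def max_def split: if_splits)
        then have "\<bar>h (lft v) - h t\<bar> < e" using d0(2) lft_in[OF v0] by (simp add: dist_real_def)
        then show ?thesis by (simp add: Hx_def)
      qed
      show "norm (G h (\<sigma> t) - G h s - (\<sigma> t - s) *\<^sub>R h t) \<le> e * \<bar>\<sigma> t - s\<bar>"
      proof (cases "s \<le> t")
        case True
        have "\<bar>integral {s..t} (Hx h) - (t - s) * h t\<bar> \<le> e * (t - s)"
          using close True by (intro int_dev_bound[OF True Hx_int_ab[OF s0(1)]]) auto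
        then show ?thesis using G_diff[OF s0(1) True] \<open>\<sigma> t = t\<close> True by simp
      next
        case False
        then have ts: "t \<le> s" by simp
        have "\<bar>integral {t..s} (Hx h) - (s - t) * h t\<bar> \<le> e * (s - t)"
          using close ts by (intro int_dev_bound[OF ts Hx_int_ab[OF s0(2)]]) auto
        moreover have "G h t - G h s - (t - s) * h t = - (integral {t..s} (Hx h) - (s - t) * h t)"
          using G_diff[OF s0(2) ts] by (simp add: algebra_simps)
        ultimately show ?thesis using \<open>\<sigma> t = t\<close> ts by simp
      qed
    qed
  qed
next
  case False
  have ts: "t < \<sigma> t" using False sig_ge[of t] by simp
  have t0: "0 \<le> t" using nonneg t by simp
  define Bb where "Bb = (B * exp (\<bar>\<kappa>\<bar> * M)) * exp (\<bar>\<kappa>\<bar> * (t + 1))"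
  have Hb: "\<bar>Hx h v - 0\<bar> \<le> Bb" if "0 \<le> v" "v \<le> t + 1" for v
  proof -
    have "\<bar>Hx h v\<bar> \<le> (B * exp (\<bar>\<kappa>\<bar> * M)) * exp (- \<kappa> * v)" by (rule Hx_bound[OF hb that(1)])
    also have "exp (- \<kappa> * v) \<le> exp (\<bar>\<kappa>\<bar> * (t + 1))"
    proof -
      have "- \<kappa> * v \<le> \<bar>\<kappa>\<bar> * v" using that by (intro mult_right_mono) auto
      also have "\<dots> \<le> \<bar>\<kappa>\<bar> * (t + 1)" using that by (intro mult_left_mono) auto
      finally show ?thesis by simp
    qed
    then have "(B * exp (\<bar>\<kappa>\<bar> * M)) * exp (- \<kappa> * v) \<le> (B * exp (\<bar>\<kappa>\<bar> * M)) * exp (\<bar>\<kappa>\<bar> * (t + 1))"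
      using hb[OF zeroT] by (intro mult_left_mono) auto
    finally show ?thesis by (simp add: Bb_def)
  qed
  have Bb0: "0 \<le> Bb" using Hb[of 0] t0 by (smt (verit) abs_ge_zero)
  have cont: "continuous (at t within T) (G h)"
    unfolding continuous_within_eps_delta
  proof (intro allI impI)
    fix e :: real assume e: "e > 0"
    define d where "d = min 1 (e / (Bb + 1))"
    have d: "d > 0" using e Bb0 by (simp add: d_def)
    show "\<exists>d>0. \<forall>s\<in>T. dist s t < d \<longrightarrow> dist (G h s) (G h t) < e"
    proof (intro exI[of _ d] conjI ballI impI d)
      fix s assume s: "s \<in> T" "dist s t < d"
      have s0: "0 \<le> s" using nonneg s by simp
      have st1: "\<bar>s - t\<bar> < 1" "\<bar>s - t\<bar> < e / (Bb + 1)" using s by (auto simp: d_def dist_real_def)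
      have "\<bar>G h s - G h t\<bar> \<le> Bb * \<bar>s - t\<bar>"
      proof (cases "s \<le> t")
        case True
        have "\<bar>integral {s..t} (Hx h) - (t - s) * 0\<bar> \<le> Bb * (t - s)"
          using Hb True s0 by (intro int_dev_bound[OF True Hx_int_ab[OF s0]]) auto
        then show ?thesis using G_diff[OF s0 True] True by (simp add: abs_minus_commute)
      next
        case False
        have "\<bar>integral {t..s} (Hx h) - (s - t) * 0\<bar> \<le> Bb * (s - t)"
          using Hb False st1 t0 by (intro int_dev_bound Hx_int_ab[OF t0]) auto
        then show ?thesis using G_diff[OF t0, of s] False by simp
      qed
      also have "\<dots> \<le> Bb * (e / (Bb + 1))" using st1 Bb0 by (intro mult_left_mono) auto
      also have "\<dots> < e" using e Bb0 by (simp add: field_simps)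
      finally show "dist (G h s) (G h t) < e" by (simp add: dist_real_def)
    qed
  qed
  have step: "G h (\<sigma> t) - G h t = (\<sigma> t - t) *\<^sub>R h t"
  proof -
    have "G h (\<sigma> t) - G h t = integral {t..\<sigma> t} (Hx h)" using G_diff[OF t0] ts by simp
    also have "\<dots> = integral {t..\<sigma> t} (\<lambda>_. h t)"
    proof (rule integral_spike[of "{\<sigma> t}"])
      fix v assume v: "v \<in> {t..\<sigma> t} - {\<sigma> t}"
      have v0: "0 \<le> v" using v t0 by simp
      have "t \<le> lft v" using lft_ge[OF t] v by simp
      moreover have "\<not> t < lft v"
      proof
        assume "t < lft v"
        moreover have "lft v < \<sigma> t" using lft_le[OF v0] v by simp
        ultimately show False using sig_gap[OF lft_in[OF v0]] by blast
      qed
      ultimately show "h t = Hx h v" by (simp add: Hx_def)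
    qed simp
    also have "\<dots> = (\<sigma> t - t) *\<^sub>R h t" using ts by simp
    finally show ?thesis .
  qed
  show ?thesis by (rule dd_of_rs[OF cont ts step t])
qed

end
context tsc begin
lemma dd_shift: "has_delta_derivative T x D t \<Longrightarrow> has_delta_derivative T (\<lambda>s. x s - c) D t"
  unfolding has_delta_derivative_def by simp
end
context antid begin

lemma Hx_tail:
  assumes t0: "0 \<le> t" and k: "\<kappa> > 0"
  shows "- integral {t..} (Hx h) = G h t - integral {0..} (Hx h)"
proof -
  have "(Hx h has_integral (integral {0..t} (Hx h) + integral {t..} (Hx h))) ({0..t} \<union> {t..})"
  proof (rule has_integral_Un)
    show "(Hx h has_integral integral {0..t} (Hx h)) {0..t}"
      using Hx_int_ab[of 0 t] by (simp add: integrable_integral)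
    show "(Hx h has_integral integral {t..} (Hx h)) {t..}"
      using Hx_int_inf[OF t0 k] by (simp add: integrable_integral)
    have "{0..t} \<inter> {t..} = {t}" using t0 by auto
    then show "negligible ({0..t} \<inter> {t..})" by simp
  qed
  moreover have "{0..t} \<union> {t..} = {0::real..}" using t0 by auto
  ultimately have "integral {0..} (Hx h) = integral {0..t} (Hx h) + integral {t..} (Hx h)"
    by (metis integral_unique)
  then show ?thesis by (simp add: G_def)
qed

lemma bound_tail:
  assumes t0: "0 \<le> t" and k: "\<kappa> > 0"
  shows "\<bar>integral {t..} (Hx h)\<bar> \<le> (B * exp (\<bar>\<kappa>\<bar> * M)) * (exp (- \<kappa> * t) / \<kappa>)"
proof -
  let ?B = "B * exp (\<bar>\<kappa>\<bar> * M)"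
  have hi: "((\<lambda>u. ?B * exp (- \<kappa> * u)) has_integral ?B * (exp (- \<kappa> * t) / \<kappa>)) {t..}"
    using has_integral_mult_right[OF has_integral_exp_minus_to_infinity[OF k, of t]] by simp
  have "norm (integral {t..} (Hx h)) \<le> integral {t..} (\<lambda>u. ?B * exp (- \<kappa> * u))"
    using Hx_bound[OF hb] t0 hi
    by (intro Henstock_Kurzweil_Integration.integral_norm_bound_integral Hx_int_inf[OF t0 k])
      (auto simp: has_integral_integrable)
  then show ?thesis using integral_unique[OF hi] by simp
qed

lemma bound_G:
  assumes t0: "0 \<le> t" and k: "\<kappa> \<le> 0"
  shows "\<bar>G h t\<bar> \<le> (B * exp (\<bar>\<kappa>\<bar> * M)) * exp (- \<kappa> * t) * t"
proof -
  let ?B = "B * exp (\<bar>\<kappa>\<bar> * M)"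
  have "\<bar>Hx h v - 0\<bar> \<le> ?B * exp (- \<kappa> * t)" if "v \<in> {0..t}" for v
  proof -
    have "\<bar>Hx h v\<bar> \<le> ?B * exp (- \<kappa> * v)" using Hx_bound[OF hb] that by simp
    also have "\<dots> \<le> ?B * exp (- \<kappa> * t)"
      using that k hb[OF zeroT] by (intro mult_left_mono) (auto simp: mult_left_mono_neg)
    finally show ?thesis by simp
  qed
  then have "\<bar>integral {0..t} (Hx h) - (t - 0) * 0\<bar> \<le> ?B * exp (- \<kappa> * t) * (t - 0)"
    by (intro int_dev_bound[OF t0 Hx_int_ab[OF order_refl]])
  then show ?thesis by (simp add: G_def)
qed

end


context tsc begin

lemma subexp_bound:
  fixes F :: "real \<Rightarrow> real^'n^'m"
  assumes cont: "continuous_on T F" and nz: "\<And>t. t \<in> T \<Longrightarrow> F t \<noteq> 0"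
    and ups: "Upsilon T F = 0" and e: "\<epsilon> > 0"
  shows "\<exists>K>0. \<forall>t\<in>T. norm (F t) \<le> K * exp (\<epsilon> * t)"
proof -
  have "Limsup (inf at_top (principal T)) (\<lambda>t. ereal (ln (norm (F t)) / t)) < ereal \<epsilon>"
    using ups e unfolding Upsilon_def by simp
  from Limsup_lessD[OF this]
  have "eventually (\<lambda>t. ereal (ln (norm (F t)) / t) < ereal \<epsilon>) (inf at_top (principal T))" .
  then obtain N where N: "\<And>t. t \<ge> N \<Longrightarrow> t \<in> T \<Longrightarrow> ln (norm (F t)) / t < \<epsilon>"
    unfolding eventually_inf_principal eventually_at_top_linorder by auto
  define N1 where "N1 = max N 1"
  have tail: "norm (F t) < exp (\<epsilon> * t)" if "t \<in> T" "t > N1" for t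
  proof -
    have t1: "t > 0" using that by (simp add: N1_def)
    have "ln (norm (F t)) / t < \<epsilon>" using N[of t] that by (simp add: N1_def)
    then have "ln (norm (F t)) < \<epsilon> * t" using t1 by (simp add: divide_less_eq mult.commute)
    moreover have "norm (F t) > 0" using nz[OF that(1)] by simp
    ultimately show ?thesis by (metis exp_less_mono exp_ln)
  qed
  define K0 where "K0 = T \<inter> {0..N1}"
  have "compact K0" unfolding K0_def by (intro closed_Int_compact closedT compact_Icc)
  moreover have "continuous_on K0 (\<lambda>t. norm (F t))"
    using cont by (intro continuous_intros) (auto simp: K0_def intro: continuous_on_subset)
  ultimately have "compact ((\<lambda>t. norm (F t)) ` K0)" by (rule compact_continuous_image[rotated])
  then have "bounded ((\<lambda>t. norm (F t)) ` K0)" by (rule compact_imp_bounded)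
  then obtain C where C: "\<And>t. t \<in> K0 \<Longrightarrow> norm (F t) \<le> C" unfolding bounded_real by fastforce
  define K where "K = max C 1"
  have Kpos: "K > 0" by (simp add: K_def)
  show ?thesis
  proof (intro exI[of _ K] conjI ballI)
    show "K > 0" by (simp add: K_def)
    fix t assume t: "t \<in> T"
    have t0: "0 \<le> t" using nonneg[OF t] .
    have ex1: "1 \<le> exp (\<epsilon> * t)" using e t0 by simp
    show "norm (F t) \<le> K * exp (\<epsilon> * t)"
    proof (cases "t \<le> N1")
      case True
      then have "norm (F t) \<le> K" using C[of t] t t0 by (auto simp: K0_def K_def)
      also have "\<dots> = K * 1" by simp
      also have "\<dots> \<le> K * exp (\<epsilon> * t)" using ex1 Kpos by (intro mult_left_mono) auto
      finally show ?thesis .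
    next
      case False
      then have "norm (F t) \<le> exp (\<epsilon> * t)" using tail[OF t] by simp
      also have "\<dots> \<le> K * exp (\<epsilon> * t)" using Kpos by (simp add: K_def)
      finally show ?thesis .
    qed
  qed
qed

end

lemma Bhat_axis: "Bhat T b t *v (c *\<^sub>R axis i 1) =
   ((if graininess T t = 0 then b $ i else (exp (b $ i * graininess T t) - 1) / graininess T t) * c) *\<^sub>R axis i (1::real)"
  by (simp add: vec_eq_iff Bhat_def matrix_vector_mult_def axis_def if_distrib cong: if_cong)

lemma det_cont:
  fixes X :: "real \<Rightarrow> real^'n^'n"
  assumes "\<And>r c. continuous F (\<lambda>s. X s $ r $ c)"
  shows "continuous F (\<lambda>s. det (X s))"
  unfolding det_def by (intro continuous_sum continuous_mult continuous_const continuous_prod assms)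

lemma minv_right: "invertible A \<Longrightarrow> A ** matrix_inv A = mat 1"
  unfolding invertible_def matrix_inv_def by (rule someI_ex[THEN conjunct1])

lemma minv_left: "invertible A \<Longrightarrow> matrix_inv A ** A = mat 1"
  unfolding invertible_def matrix_inv_def by (rule someI_ex[THEN conjunct2])

lemma minv_entry:
  fixes A :: "real^'n^'n"
  assumes "invertible A"
  shows "matrix_inv A $ k $ j = det (\<chi> r c. if c = k then axis j 1 $ r else A $ r $ c) / det A"
proof -
  have d: "det A \<noteq> 0" using assms invertible_det_nz by blast
  have "A *v (matrix_inv A *v axis j 1) = axis j 1"
    by (simp add: matrix_vector_mul_assoc minv_right[OF assms])
  then have "matrix_inv A *v axis j 1 = (\<chi> k. det (\<chi> r c. if c = k then axis j 1 $ r else A $ r $ c) / det A)"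
    using cramer[OF d] by blast
  moreover have "(matrix_inv A *v axis j 1) $ k = matrix_inv A $ k $ j"
    by (simp add: matrix_vector_mult_basis column_def)
  ultimately show ?thesis by simp
qed


lemma mat1_nz: "(mat 1 :: real^'n^'n) \<noteq> 0"
proof
  assume "(mat 1 :: real^'n^'n) = 0"
  then have "(mat 1 :: real^'n^'n) $ i $ i = 0" for i by simp
  then show False by (simp add: mat_def)
qed

lemma invertible_nz: fixes A :: "real^'n^'n" shows "invertible A \<Longrightarrow> A \<noteq> 0"
  using minv_right[of A] mat1_nz by auto

lemma minv_nz: fixes A :: "real^'n^'n" shows "invertible A \<Longrightarrow> matrix_inv A \<noteq> 0"
  using minv_left[of A] mat1_nz by auto

locale regsys = tsc T M for T M +
  fixes A :: "real \<Rightarrow> real^'n^'n" and b :: "real^'n" and L :: "real \<Rightarrow> real^'n^'n"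
  assumes Linv: "\<And>t. t \<in> T \<Longrightarrow> invertible (L t)"
    and UL: "Upsilon T L = 0" and ULi: "Upsilon T (\<lambda>t. matrix_inv (L t)) = 0"
    and eqv: "\<And>y. solves_linear T (Bhat T b) (\<lambda>_. 0) y \<longleftrightarrow> solves_linear T A (\<lambda>_. 0) (\<lambda>t. L t *v y t)"
begin

definition phi :: "'n \<Rightarrow> real \<Rightarrow> real^'n" where "phi i t = L t *v (exp (b $ i * t) *\<^sub>R axis i 1)"

lemma phi_dd: assumes "t \<in> T" shows "has_delta_derivative T (phi i) (A t *v phi i t) t"
proof -
  let ?y = "\<lambda>t. exp (b $ i * t) *\<^sub>R axis i (1::real)"
  have "solves_linear T (Bhat T b) (\<lambda>_. 0) ?y"
    unfolding solves_linear_def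
  proof
    fix t assume t: "t \<in> T"
    have "has_delta_derivative T ?y ((hatc (b $ i) t * exp (b $ i * t)) *\<^sub>R axis i 1) t"
      by (rule dd_scale_vec[OF exp_dd[OF t]])
    moreover have "Bhat T b t *v ?y t + 0 = (hatc (b $ i) t * exp (b $ i * t)) *\<^sub>R axis i 1"
      by (simp add: Bhat_axis hatc_def)
    ultimately show "has_delta_derivative T ?y (Bhat T b t *v ?y t + 0) t" by simp
  qed
  then have "solves_linear T A (\<lambda>_. 0) (\<lambda>t. L t *v ?y t)" by (rule eqv[THEN iffD1])
  then show ?thesis using assms unfolding solves_linear_def phi_def by simp
qed

lemma phi_comp: "phi i t $ r = exp (b $ i * t) * L t $ r $ i"
  by (simp add: phi_def matrix_vector_mult_def axis_def if_distrib cong: if_cong)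

lemma L_entry_cont: assumes "t \<in> T" shows "continuous (at t within T) (\<lambda>s. L s $ r $ i)"
proof -
  have "continuous (at t within T) (\<lambda>s. exp (- (b $ i * s)) * (phi i s $ r))"
    using dd_cont[OF phi_dd[OF assms] assms] by (intro continuous_intros)
  moreover have "exp (- (b $ i * s)) * (phi i s $ r) = L s $ r $ i" for s
    by (simp add: phi_comp exp_minus field_simps)
  ultimately show ?thesis by simp
qed

lemma L_cont_on: "continuous_on T L"
proof -
  have "continuous_on T (\<lambda>s. L s $ r $ c)" for r c
    using L_entry_cont by (simp add: continuous_on_eq_continuous_within)
  then have "continuous_on T (\<lambda>s. \<chi> r. \<chi> c. L s $ r $ c)" by (intro continuous_on_vec_lambda)
  then show ?thesis by simp
qed

lemma Li_entry_cont: assumes t: "t \<in> T" shows "continuous (at t within T) (\<lambda>s. matrix_inv (L s) $ k $ j)"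
proof -
  let ?N = "\<lambda>s. det (\<chi> r c. if c = k then axis j 1 $ r else L s $ r $ c)"
  have cN: "continuous (at t within T) ?N"
  proof (rule det_cont)
    fix r c show "continuous (at t within T) (\<lambda>s. (\<chi> r c. if c = k then axis j 1 $ r else L s $ r $ c) $ r $ c)"
      by (cases "c = k") (simp_all add: L_entry_cont[OF t])
  qed
  have cD: "continuous (at t within T) (\<lambda>s. det (L s))"
    by (rule det_cont) (rule L_entry_cont[OF t])
  have d: "det (L t) \<noteq> 0" using Linv[OF t] invertible_det_nz by blast
  have "((\<lambda>s. ?N s / det (L s)) \<longlongrightarrow> ?N t / det (L t)) (at t within T)"
    using cN cD d unfolding continuous_within by (intro tendsto_divide) auto
  moreover have "\<forall>\<^sub>F s in at t within T. ?N s / det (L s) = matrix_inv (L s) $ k $ j"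
    unfolding eventually_at_filter using minv_entry[OF Linv] by auto
  ultimately have "((\<lambda>s. matrix_inv (L s) $ k $ j) \<longlongrightarrow> ?N t / det (L t)) (at t within T)"
    by (rule Lim_transform_eventually)
  then show ?thesis unfolding continuous_within using minv_entry[OF Linv[OF t]] by simp
qed

lemma Li_cont_on: "continuous_on T (\<lambda>s. matrix_inv (L s))"
proof -
  have "continuous_on T (\<lambda>s. matrix_inv (L s) $ r $ c)" for r c
    using Li_entry_cont by (simp add: continuous_on_eq_continuous_within)
  then have "continuous_on T (\<lambda>s. \<chi> r. \<chi> c. matrix_inv (L s) $ r $ c)" by (intro continuous_on_vec_lambda)
  then show ?thesis by simp
qed

lemma L_bounds: assumes "\<epsilon> > 0"
  shows "\<exists>K>0. \<forall>t\<in>T. norm (L t) \<le> K * exp (\<epsilon> * t) \<and> norm (matrix_inv (L t)) \<le> K * exp (\<epsilon> * t)"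
proof -
  obtain K1 where K1: "K1 > 0" "\<forall>t\<in>T. norm (L t) \<le> K1 * exp (\<epsilon> * t)"
    using subexp_bound[OF L_cont_on _ UL assms] Linv invertible_nz by blast
  obtain K2 where K2: "K2 > 0" "\<forall>t\<in>T. norm (matrix_inv (L t)) \<le> K2 * exp (\<epsilon> * t)"
    using subexp_bound[OF Li_cont_on _ ULi assms] Linv minv_nz by blast
  show ?thesis
  proof (intro exI[of _ "max K1 K2"] conjI ballI)
    show "max K1 K2 > 0" using K1 by simp
    fix t assume t: "t \<in> T"
    show "norm (L t) \<le> max K1 K2 * exp (\<epsilon> * t)"
      using K1(2) t by (smt (verit) exp_gt_zero mult_right_mono)
    show "norm (matrix_inv (L t)) \<le> max K1 K2 * exp (\<epsilon> * t)"
      using K2(2) t by (smt (verit) exp_gt_zero mult_right_mono)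
  qed
qed

end


lemma mv_sum: fixes A :: "real^'n^'m" shows "A *v (\<Sum>i\<in>I. f i) = (\<Sum>i\<in>I. A *v f i)"
  using linear_sum[OF matrix_vector_mul_linear[of A]] by simp

lemma mv_expand: fixes A :: "real^'n^'m" shows "(\<Sum>i\<in>UNIV. c $ i *\<^sub>R (A *v axis i 1)) = A *v c"
  by (simp only: matrix_vector_mult_basis) (simp add: matrix_mult_sum scalar_mult_eq_scaleR)

context tsc begin
lemma dd_cong: assumes "\<And>s. s \<in> T \<Longrightarrow> x s = y s" "t \<in> T"
  shows "has_delta_derivative T x D t \<longleftrightarrow> has_delta_derivative T y D t"
  unfolding has_delta_derivative_def using assms sig_in[of t] by auto
end

locale mainloc = regsys T M A b L for T M and A :: "real \<Rightarrow> real^'n^'n" and b L +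
  fixes lam \<gamma> :: real
  assumes lam: "0 < lam" "lam < \<gamma>"
begin

definition "eps = (\<gamma> - lam) / 3"

lemma eps_pos: "eps > 0" using lam by (simp add: eps_def)

definition "KK = (SOME K. K > 0 \<and> (\<forall>t\<in>T. norm (L t) \<le> K * exp (eps * t) \<and> norm (matrix_inv (L t)) \<le> K * exp (eps * t)))"

lemma KK: "KK > 0" "\<And>t. t \<in> T \<Longrightarrow> norm (L t) \<le> KK * exp (eps * t)"
  "\<And>t. t \<in> T \<Longrightarrow> norm (matrix_inv (L t)) \<le> KK * exp (eps * t)"
  using someI_ex[OF L_bounds[OF eps_pos]] unfolding KK_def by auto

definition hf :: "'n \<Rightarrow> (real \<Rightarrow> real^'n) \<Rightarrow> real \<Rightarrow> real" where
  "hf i f t = exp (- (b $ i) * \<sigma> t) * (matrix_inv (L (\<sigma> t)) *v f t) $ i"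

definition kap :: "'n \<Rightarrow> real" where "kap i = \<gamma> + b $ i - eps"

definition Bh :: "'n \<Rightarrow> real \<Rightarrow> real" where "Bh i N = KK * N * exp (\<bar>eps - b $ i\<bar> * M)"

definition rdc :: "(real \<Rightarrow> real^'n) \<Rightarrow> bool" where
  "rdc f \<longleftrightarrow> (\<forall>t\<in>T. \<sigma> t = t \<longrightarrow> continuous (at t within T) f)"

lemma hf_cont: assumes f: "rdc f" and t: "t \<in> T" "\<sigma> t = t"
  shows "continuous (at t within T) (hf i f)"
proof -
  have cLi: "continuous (at t within T) (\<lambda>s. matrix_inv (L (\<sigma> s)))"
  proof -
    have "continuous (at (\<sigma> t) within T) (\<lambda>u. matrix_inv (L u))"
      using Li_cont_on t(1) sig_in[of t] by (simp add: continuous_on_eq_continuous_within)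
    then have "continuous (at (\<sigma> t) within \<sigma> ` T) (\<lambda>u. matrix_inv (L u))"
      by (rule continuous_within_subset) (auto intro: sig_in)
    from continuous_within_compose[OF sig_cont[OF t] this] show ?thesis by (simp add: o_def)
  qed
  have cf: "continuous (at t within T) f" using f t by (auto simp: rdc_def)
  have "continuous (at t within T) (\<lambda>s. exp (- (b $ i) * \<sigma> s) * (\<Sum>j\<in>UNIV. matrix_inv (L (\<sigma> s)) $ i $ j * f s $ j))"
    using cLi cf sig_cont[OF t] by (intro continuous_intros) auto
  then show ?thesis by (simp add: hf_def[abs_def] matrix_vector_mult_def)
qed

lemma hf_bound: assumes fb: "\<And>t. t \<in> T \<Longrightarrow> norm (f t) \<le> N * exp (- \<gamma> * t)" and t: "t \<in> T"
  shows "\<bar>hf i f t\<bar> \<le> Bh i N * exp (- kap i * t)"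
proof -
  have "norm (f 0) \<le> N" using fb[OF zeroT] by simp
  then have N: "0 \<le> N" by (smt (verit) norm_ge_zero)
  let ?s = "\<sigma> t"
  have s: "t \<le> ?s" "?s \<le> t + M" "?s \<in> T" using sig_ge sig_leM[OF t] sig_in by auto
  have "\<bar>(matrix_inv (L ?s) *v f t) $ i\<bar> \<le> norm (matrix_inv (L ?s) *v f t)" by (rule component_le_norm_cart)
  also have "\<dots> \<le> norm (matrix_inv (L ?s)) * norm (f t)" by (rule norm_mv)
  also have "\<dots> \<le> (KK * exp (eps * ?s)) * (N * exp (- \<gamma> * t))"
    using KK(3)[OF s(3)] fb[OF t] KK(1) by (intro mult_mono) (auto intro: less_imp_le)
  finally have c: "\<bar>(matrix_inv (L ?s) *v f t) $ i\<bar> \<le> KK * N * exp (eps * ?s - \<gamma> * t)"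
    by (simp add: exp_add[symmetric] exp_diff mult_ac)
  have "\<bar>hf i f t\<bar> = exp (- (b $ i) * ?s) * \<bar>(matrix_inv (L ?s) *v f t) $ i\<bar>"
    by (simp add: hf_def abs_mult)
  also have "\<dots> \<le> exp (- (b $ i) * ?s) * (KK * N * exp (eps * ?s - \<gamma> * t))"
    using c by (intro mult_left_mono) auto
  also have "\<dots> = KK * N * exp ((eps - b $ i) * ?s - \<gamma> * t)"
    by (simp add: exp_add[symmetric] algebra_simps)
  also have "\<dots> \<le> KK * N * exp (\<bar>eps - b $ i\<bar> * M - kap i * t)"
  proof -
    have "(eps - b $ i) * ?s = (eps - b $ i) * t + (eps - b $ i) * (?s - t)" by (simp add: algebra_simps)
    also have "(eps - b $ i) * (?s - t) \<le> \<bar>eps - b $ i\<bar> * M"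
    proof -
      have "(eps - b $ i) * (?s - t) \<le> \<bar>eps - b $ i\<bar> * (?s - t)" using s by (intro mult_right_mono) auto
      also have "\<dots> \<le> \<bar>eps - b $ i\<bar> * M" using s by (intro mult_left_mono) auto
      finally show ?thesis .
    qed
    finally have "(eps - b $ i) * ?s - \<gamma> * t \<le> \<bar>eps - b $ i\<bar> * M - kap i * t"
      by (simp add: kap_def algebra_simps)
    then show ?thesis using KK(1) N by (intro mult_left_mono) auto
  qed
  also have "\<dots> = Bh i N * exp (- kap i * t)"
    by (simp add: Bh_def exp_diff exp_minus field_simps)
  finally show ?thesis .
qed

lemma antid_hf: assumes "rdc f" "\<And>t. t \<in> T \<Longrightarrow> norm (f t) \<le> N * exp (- \<gamma> * t)"
  shows "antid T M (hf i f) (Bh i N) (kap i)"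
proof unfold_locales
  show "continuous (at t within T) (hf i f)" if "t \<in> T" "\<sigma> t = t" for t
    by (rule hf_cont[OF assms(1) that])
  show "\<bar>hf i f t\<bar> \<le> Bh i N * exp (- kap i * t)" if "t \<in> T" for t
    by (rule hf_bound[OF assms(2) that])
qed

definition z :: "'n \<Rightarrow> (real \<Rightarrow> real^'n) \<Rightarrow> real \<Rightarrow> real" where
  "z i f t = (if kap i > 0 then - integral {t..} (Hx (hf i f)) else G (hf i f) t)"

definition Psi :: "(real \<Rightarrow> real^'n) \<Rightarrow> real \<Rightarrow> real^'n" where
  "Psi f t = (\<Sum>i\<in>UNIV. z i f t *\<^sub>R phi i t)"

lemma z_dd: assumes "rdc f" "\<And>t. t \<in> T \<Longrightarrow> norm (f t) \<le> N * exp (- \<gamma> * t)" and t: "t \<in> T"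
  shows "has_delta_derivative T (z i f) (hf i f t) t"
proof -
  interpret a: antid T M "hf i f" "Bh i N" "kap i" by (rule antid_hf[OF assms(1,2)])
  show ?thesis
  proof (cases "kap i > 0")
    case True
    have "has_delta_derivative T (\<lambda>s. G (hf i f) s - integral {0..} (Hx (hf i f))) (hf i f t) t"
      by (rule dd_shift[OF a.G_dd[OF t]])
    moreover have eq: "z i f s = G (hf i f) s - integral {0..} (Hx (hf i f))" if "s \<in> T" for s
      using a.Hx_tail[OF nonneg[OF that] True] True unfolding z_def by simp
    ultimately show ?thesis using dd_cong[of "z i f" "\<lambda>s. G (hf i f) s - integral {0..} (Hx (hf i f))", OF eq t] by simp
  next
    case False
    then have "z i f = G (hf i f)" unfolding z_def by (intro ext) simp
    then show ?thesis using a.G_dd[OF t] by simp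
  qed
qed

lemma phi_sig: assumes t: "t \<in> T"
  shows "(\<Sum>i\<in>UNIV. hf i f t *\<^sub>R phi i (\<sigma> t)) = f t"
proof -
  let ?s = "\<sigma> t"
  let ?c = "matrix_inv (L ?s) *v f t"
  have "hf i f t *\<^sub>R phi i ?s = ?c $ i *\<^sub>R (L ?s *v axis i 1)" for i
    by (simp add: hf_def phi_def matrix_vector_mult_scaleR exp_minus field_simps)
  then have "(\<Sum>i\<in>UNIV. hf i f t *\<^sub>R phi i ?s) = (\<Sum>i\<in>UNIV. ?c $ i *\<^sub>R (L ?s *v axis i 1))" by simp
  also have "\<dots> = L ?s *v ?c" by (rule mv_expand)
  also have "\<dots> = f t" using minv_right[OF Linv[OF sig_in]] by (simp add: matrix_vector_mul_assoc)
  finally show ?thesis .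
qed

lemma Psi_dd: assumes f: "rdc f" "\<And>t. t \<in> T \<Longrightarrow> norm (f t) \<le> N * exp (- \<gamma> * t)" and t: "t \<in> T"
  shows "has_delta_derivative T (Psi f) (A t *v Psi f t + f t) t"
proof -
  have zd: "has_delta_derivative T (z i f) (hf i f t) t" for i by (rule z_dd[OF f t])
  have pd: "has_delta_derivative T (phi i) (A t *v phi i t) t" for i by (rule phi_dd[OF t])
  have Apsi: "A t *v Psi f t = (\<Sum>i\<in>UNIV. z i f t *\<^sub>R (A t *v phi i t))"
    by (simp add: Psi_def mv_sum matrix_vector_mult_scaleR)
  show ?thesis
  proof (cases "\<sigma> t = t")
    case True
    have "((\<lambda>s. \<Sum>i\<in>UNIV. z i f s *\<^sub>R phi i s) has_vector_derivative
        (\<Sum>i\<in>UNIV. z i f t *\<^sub>R (A t *v phi i t) + hf i f t *\<^sub>R phi i t)) (at t within T)"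
      using dd_rd[OF zd t True] dd_rd[OF pd t True]
      by (intro has_vector_derivative_sum has_vector_derivative_scaleR)
        (auto simp: has_real_derivative_iff_has_vector_derivative)
    moreover have "(\<Sum>i\<in>UNIV. z i f t *\<^sub>R (A t *v phi i t) + hf i f t *\<^sub>R phi i t) = A t *v Psi f t + f t"
      using phi_sig[OF t, of f] True by (simp add: sum.distrib Apsi)
    ultimately have "(Psi f has_vector_derivative A t *v Psi f t + f t) (at t within T)"
      by (simp add: Psi_def[abs_def])
    then show ?thesis by (rule dd_of_rd[OF _ True])
  next
    case False
    have ts: "t < \<sigma> t" using False sig_ge[of t] by simp
    have cont: "continuous (at t within T) (Psi f)"
      unfolding Psi_def[abs_def] using dd_cont[OF zd t] dd_cont[OF pd t]
      by (intro continuous_intros) auto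
    let ?m = "\<sigma> t - t"
    have zs: "z i f (\<sigma> t) = z i f t + ?m * hf i f t" for i
    proof -
      have "z i f (\<sigma> t) - z i f t = ?m * hf i f t" using dd_step[OF zd t] by simp
      then show ?thesis by linarith
    qed
    have ps: "phi i (\<sigma> t) = phi i t + ?m *\<^sub>R (A t *v phi i t)" for i using dd_step[OF pd t] by (simp add: algebra_simps)
    have "Psi f (\<sigma> t) - Psi f t = (\<Sum>i\<in>UNIV. z i f (\<sigma> t) *\<^sub>R phi i (\<sigma> t) - z i f t *\<^sub>R phi i t)"
      by (simp add: Psi_def sum_subtractf)
    also have "\<dots> = (\<Sum>i\<in>UNIV. ?m *\<^sub>R (hf i f t *\<^sub>R phi i (\<sigma> t)) + ?m *\<^sub>R (z i f t *\<^sub>R (A t *v phi i t)))"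
    proof (rule sum.cong[OF refl])
      fix i
      have "z i f (\<sigma> t) *\<^sub>R phi i (\<sigma> t) - z i f t *\<^sub>R phi i t
          = (z i f (\<sigma> t) - z i f t) *\<^sub>R phi i (\<sigma> t) + z i f t *\<^sub>R (phi i (\<sigma> t) - phi i t)"
        by (simp add: algebra_simps)
      also have "\<dots> = ?m *\<^sub>R (hf i f t *\<^sub>R phi i (\<sigma> t)) + ?m *\<^sub>R (z i f t *\<^sub>R (A t *v phi i t))"
      proof -
        have d1: "z i f (\<sigma> t) - z i f t = ?m * hf i f t" using zs[of i] by simp
        have d2: "phi i (\<sigma> t) - phi i t = ?m *\<^sub>R (A t *v phi i t)" using dd_step[OF pd t] by simp
        show ?thesis unfolding d1 d2 by (simp add: mult.commute)
      qed
      finally show "z i f (\<sigma> t) *\<^sub>R phi i (\<sigma> t) - z i f t *\<^sub>R phi i t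
          = ?m *\<^sub>R (hf i f t *\<^sub>R phi i (\<sigma> t)) + ?m *\<^sub>R (z i f t *\<^sub>R (A t *v phi i t))" .
    qed
    also have "\<dots> = ?m *\<^sub>R (\<Sum>i\<in>UNIV. hf i f t *\<^sub>R phi i (\<sigma> t)) + ?m *\<^sub>R (\<Sum>i\<in>UNIV. z i f t *\<^sub>R (A t *v phi i t))"
      by (simp only: sum.distrib scaleR_sum_right)
    also have "\<dots> = ?m *\<^sub>R (f t + A t *v Psi f t)"
      by (simp only: phi_sig[OF t] Apsi[symmetric] scaleR_right_distrib)
    finally have step: "Psi f (\<sigma> t) - Psi f t = ?m *\<^sub>R (A t *v Psi f t + f t)" by (simp add: add.commute)
    show ?thesis by (rule dd_of_rs[OF cont ts step t])
  qed
qed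

end


context mainloc begin

definition Cc :: "'n \<Rightarrow> real" where
  "Cc i = KK * KK * exp (\<bar>eps - b $ i\<bar> * M) * exp (\<bar>kap i\<bar> * M) * (if kap i > 0 then 1 / kap i else 1 / eps)"

definition "CC = (\<Sum>i\<in>UNIV. Cc i)"

lemma Cc_nonneg: "0 \<le> Cc i"
  using KK(1) eps_pos by (simp add: Cc_def)

lemma phi_norm: assumes "t \<in> T" shows "norm (phi i t) \<le> KK * exp (eps * t) * exp (b $ i * t)"
proof -
  have "norm (phi i t) \<le> norm (L t) * norm (exp (b $ i * t) *\<^sub>R axis i (1::real))"
    unfolding phi_def by (rule norm_mv)
  also have "\<dots> = norm (L t) * exp (b $ i * t)" by simp
  also have "\<dots> \<le> KK * exp (eps * t) * exp (b $ i * t)"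
    using KK(2)[OF assms] by (intro mult_right_mono) auto
  finally show ?thesis .
qed

lemma exponent_id: "exp (- kap i * t) * exp (eps * t) * exp (b $ i * t) * exp (lam * t) = exp (- eps * t)"
proof -
  have "- kap i * t + eps * t + b $ i * t + lam * t = - eps * t"
    by (simp add: kap_def eps_def field_simps)
  then show ?thesis by (metis exp_add)
qed

lemma term_bound:
  assumes f: "rdc f" "\<And>t. t \<in> T \<Longrightarrow> norm (f t) \<le> N * exp (- \<gamma> * t)" and t: "t \<in> T"
  shows "\<bar>z i f t\<bar> * norm (phi i t) * exp (lam * t) \<le> N * Cc i"
proof -
  interpret a: antid T M "hf i f" "Bh i N" "kap i" by (rule antid_hf[OF f])
  have t0: "0 \<le> t" using nonneg[OF t] .
  have "norm (f 0) \<le> N" using f(2)[OF zeroT] by simp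
  then have N: "0 \<le> N" by (smt (verit) norm_ge_zero)
  let ?B = "Bh i N * exp (\<bar>kap i\<bar> * M)"
  have B: "0 \<le> ?B" using N KK(1) by (simp add: Bh_def)
  have pn: "norm (phi i t) * exp (lam * t) \<le> KK * exp (eps * t) * exp (b $ i * t) * exp (lam * t)"
    using phi_norm[OF t] by (intro mult_right_mono) auto
  have e1: "exp (- eps * t) \<le> 1" using eps_pos t0 by simp
  show ?thesis
  proof (cases "kap i > 0")
    case True
    have zb: "\<bar>z i f t\<bar> \<le> ?B * (exp (- kap i * t) / kap i)"
      using a.bound_tail[OF t0 True] True by (simp add: z_def)
    have "\<bar>z i f t\<bar> * norm (phi i t) * exp (lam * t) = \<bar>z i f t\<bar> * (norm (phi i t) * exp (lam * t))"
      by (simp only: mult.assoc)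
    also have "\<dots> \<le> (?B * (exp (- kap i * t) / kap i)) * (KK * exp (eps * t) * exp (b $ i * t) * exp (lam * t))"
      by (rule mult_mono[OF zb pn]) (use B True t0 in auto)
    also have "\<dots> = (?B * KK / kap i) * (exp (- kap i * t) * exp (eps * t) * exp (b $ i * t) * exp (lam * t))"
      by (simp add: field_simps)
    also have "\<dots> = (?B * KK / kap i) * exp (- eps * t)" by (simp only: exponent_id)
    also have "\<dots> \<le> (?B * KK / kap i) * 1"
      using e1 B KK(1) True by (intro mult_left_mono) auto
    also have "\<dots> = N * Cc i" using True by (simp add: Cc_def Bh_def)
    finally show ?thesis .
  next
    case False
    have zb: "\<bar>z i f t\<bar> \<le> ?B * exp (- kap i * t) * t"
      using a.bound_G[OF t0] False by (simp add: z_def)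
    have "\<bar>z i f t\<bar> * norm (phi i t) * exp (lam * t) = \<bar>z i f t\<bar> * (norm (phi i t) * exp (lam * t))"
      by (simp only: mult.assoc)
    also have "\<dots> \<le> (?B * exp (- kap i * t) * t) * (KK * exp (eps * t) * exp (b $ i * t) * exp (lam * t))"
      by (rule mult_mono[OF zb pn]) (use B t0 in auto)
    also have "\<dots> = (?B * KK) * (t * (exp (- kap i * t) * exp (eps * t) * exp (b $ i * t) * exp (lam * t)))"
      by (simp add: field_simps)
    also have "\<dots> = (?B * KK) * (t * exp (- eps * t))" by (simp only: exponent_id)
    also have "t * exp (- eps * t) \<le> 1 / eps"
    proof -
      have "eps * t \<le> exp (eps * t)" using exp_ge_add_one_self[of "eps * t"] by linarith
      then have "eps * t * exp (- eps * t) \<le> exp (eps * t) * exp (- eps * t)" by (intro mult_right_mono) auto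
      also have "\<dots> = 1" by (simp add: exp_add[symmetric])
      finally show ?thesis using eps_pos by (simp add: field_simps)
    qed
    then have "(?B * KK) * (t * exp (- eps * t)) \<le> (?B * KK) * (1 / eps)"
      using B KK(1) by (intro mult_left_mono) auto
    also have "\<dots> = N * Cc i" using False by (simp add: Cc_def Bh_def)
    finally show ?thesis by simp
  qed
qed

lemma Psi_bound:
  assumes f: "rdc f" "\<And>t. t \<in> T \<Longrightarrow> norm (f t) \<le> N * exp (- \<gamma> * t)" and t: "t \<in> T"
  shows "norm (Psi f t) * exp (lam * t) \<le> N * CC"
proof -
  have "norm (Psi f t) \<le> (\<Sum>i\<in>UNIV. \<bar>z i f t\<bar> * norm (phi i t))"
    unfolding Psi_def by (rule order_trans[OF norm_sum]) simp
  then have "norm (Psi f t) * exp (lam * t) \<le> (\<Sum>i\<in>UNIV. \<bar>z i f t\<bar> * norm (phi i t)) * exp (lam * t)"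
    by (intro mult_right_mono) auto
  also have "\<dots> = (\<Sum>i\<in>UNIV. \<bar>z i f t\<bar> * norm (phi i t) * exp (lam * t))" by (simp add: sum_distrib_right)
  also have "\<dots> \<le> (\<Sum>i\<in>UNIV. N * Cc i)" by (intro sum_mono term_bound[OF f t])
  also have "\<dots> = N * CC" by (simp add: CC_def sum_distrib_left)
  finally show ?thesis .
qed

end


context mainloc begin

lemma hf_lin: "hf i (\<lambda>s. a *\<^sub>R f s + c *\<^sub>R g s) t = a * hf i f t + c * hf i g t"
  by (simp add: hf_def matrix_vector_right_distrib matrix_vector_mult_scaleR algebra_simps)

lemma Hx_lin: "Hx (hf i (\<lambda>s. a *\<^sub>R f s + c *\<^sub>R g s)) = (\<lambda>u. a * Hx (hf i f) u + c * Hx (hf i g) u)"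
  by (simp add: Hx_def hf_lin fun_eq_iff)

lemma z_lin:
  assumes f: "rdc f" "\<And>t. t \<in> T \<Longrightarrow> norm (f t) \<le> Nf * exp (- \<gamma> * t)"
    and g: "rdc g" "\<And>t. t \<in> T \<Longrightarrow> norm (g t) \<le> Ng * exp (- \<gamma> * t)" and t: "t \<in> T"
  shows "z i (\<lambda>s. a *\<^sub>R f s + c *\<^sub>R g s) t = a * z i f t + c * z i g t"
proof -
  interpret af: antid T M "hf i f" "Bh i Nf" "kap i" by (rule antid_hf[OF f])
  interpret ag: antid T M "hf i g" "Bh i Ng" "kap i" by (rule antid_hf[OF g])
  have t0: "0 \<le> t" using nonneg[OF t] .
  have comb: "integral S (\<lambda>u. a * Hx (hf i f) u + c * Hx (hf i g) u) = a * integral S (Hx (hf i f)) + c * integral S (Hx (hf i g))"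
    if "Hx (hf i f) integrable_on S" "Hx (hf i g) integrable_on S" for S
  proof -
    have "integral S (\<lambda>u. a * Hx (hf i f) u + c * Hx (hf i g) u) = integral S (\<lambda>u. a * Hx (hf i f) u) + integral S (\<lambda>u. c * Hx (hf i g) u)"
      using integrable_on_cmult_left[OF that(1), of a] integrable_on_cmult_left[OF that(2), of c]
      by (intro integral_add) simp_all
    then show ?thesis by (simp add: integral_mult_right)
  qed
  show ?thesis
  proof (cases "kap i > 0")
    case True
    then show ?thesis
      using comb[OF af.Hx_int_inf[OF t0 True] ag.Hx_int_inf[OF t0 True]]
      by (simp add: z_def Hx_lin)
  next
    case False
    then show ?thesis
      using comb[OF af.Hx_int_ab[OF order_refl] ag.Hx_int_ab[OF order_refl], of t]
      by (simp add: z_def Hx_lin G_def)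
  qed
qed

lemma Psi_lin:
  assumes f: "rdc f" "\<And>t. t \<in> T \<Longrightarrow> norm (f t) \<le> Nf * exp (- \<gamma> * t)"
    and g: "rdc g" "\<And>t. t \<in> T \<Longrightarrow> norm (g t) \<le> Ng * exp (- \<gamma> * t)" and t: "t \<in> T"
  shows "Psi (\<lambda>s. a *\<^sub>R f s + c *\<^sub>R g s) t = a *\<^sub>R Psi f t + c *\<^sub>R Psi g t"
  using z_lin[OF f g t]
  by (simp add: Psi_def scaleR_sum_right sum.distrib[symmetric] algebra_simps)

lemma rdc_lin: "rdc f \<Longrightarrow> rdc g \<Longrightarrow> rdc (\<lambda>s. a *\<^sub>R f s + c *\<^sub>R g s)"
  unfolding rdc_def by (auto intro!: continuous_intros)

end


lemma wn_bound: assumes "in_C T k f" "t \<in> T" shows "norm (f t) \<le> weighted_norm T k f * exp (- k * t)"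
proof -
  have "norm (f t) * exp (k * t) \<le> weighted_norm T k f"
    unfolding weighted_norm_def using assms by (intro cSUP_upper) (auto simp: in_C_def)
  then have "norm (f t) * exp (k * t) * exp (- k * t) \<le> weighted_norm T k f * exp (- k * t)"
    by (intro mult_right_mono) auto
  then show ?thesis by (simp add: mult.assoc exp_add[symmetric])
qed

lemma wn_nonneg: assumes "in_C T k f" "t \<in> T" shows "0 \<le> weighted_norm T k f"
proof -
  have "norm (f t) * exp (k * t) \<le> weighted_norm T k f"
    unfolding weighted_norm_def using assms by (intro cSUP_upper) (auto simp: in_C_def)
  moreover have "0 \<le> norm (f t) * exp (k * t)" by simp
  ultimately show ?thesis by linarith
qed

lemma wn_least: "T \<noteq> {} \<Longrightarrow> (\<And>t. t \<in> T \<Longrightarrow> norm (f t) * exp (k * t) \<le> X) \<Longrightarrow> weighted_norm T k f \<le> X"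
  unfolding weighted_norm_def by (rule cSUP_least)

lemma wn_cong: "(\<And>t. t \<in> T \<Longrightarrow> f t = g t) \<Longrightarrow> weighted_norm T k f = weighted_norm T k g"
  unfolding weighted_norm_def by (intro SUP_cong) auto

lemma inC_cong: "(\<And>t. t \<in> T \<Longrightarrow> f t = g t) \<Longrightarrow> in_C T k f \<longleftrightarrow> in_C T k g"
  unfolding in_C_def by (intro arg_cong[where f=bdd_above] image_cong) auto

lemma inC_lin: assumes "in_C T k f" "in_C T k g" shows "in_C T k (\<lambda>s. a *\<^sub>R f s + c *\<^sub>R g s)"
proof -
  obtain Bf where Bf: "\<And>t. t \<in> T \<Longrightarrow> norm (f t) * exp (k * t) \<le> Bf"
    using assms(1) unfolding in_C_def bdd_above_def by auto
  obtain Bg where Bg: "\<And>t. t \<in> T \<Longrightarrow> norm (g t) * exp (k * t) \<le> Bg"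
    using assms(2) unfolding in_C_def bdd_above_def by auto
  show ?thesis unfolding in_C_def
  proof (rule bdd_aboveI2)
    fix t assume t: "t \<in> T"
    have "norm (a *\<^sub>R f t + c *\<^sub>R g t) * exp (k * t) \<le> (\<bar>a\<bar> * norm (f t) + \<bar>c\<bar> * norm (g t)) * exp (k * t)"
      by (intro mult_right_mono) (auto intro: order_trans[OF norm_triangle_ineq])
    also have "\<dots> = \<bar>a\<bar> * (norm (f t) * exp (k * t)) + \<bar>c\<bar> * (norm (g t) * exp (k * t))"
      by (simp add: algebra_simps)
    also have "\<dots> \<le> \<bar>a\<bar> * Bf + \<bar>c\<bar> * Bg"
      using Bf[OF t] Bg[OF t] by (intro add_mono mult_left_mono) auto
    finally show "norm (a *\<^sub>R f t + c *\<^sub>R g t) * exp (k * t) \<le> \<bar>a\<bar> * Bf + \<bar>c\<bar> * Bg" .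
  qed
qed

lemma rdc_cong: assumes eq: "\<And>t. t \<in> T \<Longrightarrow> f t = g t" and t: "t \<in> T"
  and c: "continuous (at t within T) f" shows "continuous (at t within T) g"
proof -
  have "\<forall>\<^sub>F s in at t within T. f s = g s" by (auto simp: eventually_at_filter eq)
  moreover have "(f \<longlongrightarrow> f t) (at t within T)" using c by (simp add: continuous_within)
  ultimately have "(g \<longlongrightarrow> f t) (at t within T)" by (rule Lim_transform_eventually[rotated])
  then show ?thesis using eq[OF t] by (simp add: continuous_within)
qed

theorem mainTheorem4:
  fixes T :: "real set" and A :: "real \<Rightarrow> real^'n^'n" and lam \<gamma> :: real
  assumes "time_scale T" and "bdd_below T" and "Inf T = 0" and "\<not> bdd_above T"
    and "syndetic T"
    and "bounded (A ` T)" and "rd_continuous T A"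
    and "regular_system T A"
    and "0 < lam" and "lam < \<gamma>"
  shows "\<exists>C>0. \<exists>\<L> :: (real \<Rightarrow> real^'n) \<Rightarrow> (real \<Rightarrow> real^'n).
     (\<forall>f g. (\<forall>t\<in>T. f t = g t) \<longrightarrow> (\<forall>t\<in>T. \<L> f t = \<L> g t)) \<and>
     (\<forall>f g a b. in_C T \<gamma> f \<and> in_C T \<gamma> g \<longrightarrow>
        (\<forall>t\<in>T. \<L> (\<lambda>s. a *\<^sub>R f s + b *\<^sub>R g s) t = a *\<^sub>R \<L> f t + b *\<^sub>R \<L> g t)) \<and>
     (\<forall>f. in_C T \<gamma> f \<longrightarrow> in_C T lam (\<L> f)) \<and>
     (\<forall>f. in_C T \<gamma> f \<and> rd_continuous T f \<longrightarrow>
        solves_linear T A f (\<L> f) \<and>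
        weighted_norm T lam (\<L> f) \<le> C * weighted_norm T \<gamma> f)"
proof -
  have cl: "closed T" and Tne: "T \<noteq> {}" using assms(1) by (auto simp: time_scale_def)
  have z0: "0 \<in> T" using closed_contains_Inf[OF Tne assms(2) cl] assms(3) by simp
  have nn: "0 \<le> t" if "t \<in> T" for t using cInf_lower[OF that assms(2)] assms(3) by simp
  obtain M where M: "\<And>t. t \<in> T \<Longrightarrow> graininess T t \<le> M"
    using assms(5) unfolding syndetic_def bdd_above_def by auto
  obtain b :: "real^'n" and L :: "real \<Rightarrow> real^'n^'n" where
    Li: "\<forall>t\<in>T. invertible (L t)" and UL: "Upsilon T L = 0"
    and ULi: "Upsilon T (\<lambda>t. matrix_inv (L t)) = 0"
    and eqv: "\<forall>y. solves_linear T (Bhat T b) (\<lambda>_. 0) y \<longleftrightarrow> solves_linear T A (\<lambda>_. 0) (\<lambda>t. L t *v y t)"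
    using assms(8) unfolding regular_system_def by blast
  interpret m: mainloc T M A b L lam \<gamma>
  proof unfold_locales
    show "closed T" by fact
    show "0 \<in> T" by fact
    show "\<not> bdd_above T" by fact
  qed (use nn M Li UL ULi eqv assms(9,10) in auto)
  define R where "R = (\<lambda>(f::real \<Rightarrow> real^'n) t. if t \<in> T then f t else 0)"
  define W where "W = {f :: real \<Rightarrow> real^'n. (\<forall>t. t \<notin> T \<longrightarrow> f t = 0) \<and> in_C T \<gamma> f \<and> m.rdc f}"
  define P where "P = (\<lambda>(f::real \<Rightarrow> real^'n) t. if t \<in> T then m.Psi f t else 0)"
  interpret fv: vector_space "\<lambda>(r::real) (f::real \<Rightarrow> real^'n) x. r *\<^sub>R f x"
    by unfold_locales (auto simp: fun_eq_iff algebra_simps)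
  interpret vp: vector_space_pair "\<lambda>(r::real) (f::real \<Rightarrow> real^'n) x. r *\<^sub>R f x" "\<lambda>(r::real) (f::real \<Rightarrow> real^'n) x. r *\<^sub>R f x" ..
  have Wlin: "(\<lambda>s. a *\<^sub>R f s + c *\<^sub>R g s) \<in> W" if "f \<in> W" "g \<in> W" for f g a c
    using that inC_lin m.rdc_lin unfolding W_def by auto
  have W0: "0 \<in> W"
    unfolding W_def in_C_def m.rdc_def by (auto simp: zero_fun_def intro: continuous_intros)
  have bnd: "norm (f t) \<le> weighted_norm T \<gamma> f * exp (- \<gamma> * t)" if "f \<in> W" "t \<in> T" for f t
    using wn_bound that unfolding W_def by blast
  have rdcW: "m.rdc f" if "f \<in> W" for f using that unfolding W_def by blast
  have Plin: "P (\<lambda>s. a *\<^sub>R f s + c *\<^sub>R g s) = (\<lambda>t. a *\<^sub>R P f t + c *\<^sub>R P g t)" if "f \<in> W" "g \<in> W" for f g a c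
    unfolding P_def using m.Psi_lin[OF rdcW[OF that(1)] bnd[OF that(1)] rdcW[OF that(2)] bnd[OF that(2)]]
    by (auto simp: fun_eq_iff)
  have P0: "P 0 = 0"
    using Plin[OF W0 W0, of 0 0] by (simp add: fun_eq_iff zero_fun_def)
  have PC: "in_C T lam (P f)" if "f \<in> W" for f
  proof -
    have "norm (P f t) * exp (lam * t) \<le> weighted_norm T \<gamma> f * m.CC" if "t \<in> T" for t
      using m.Psi_bound[OF rdcW[OF \<open>f \<in> W\<close>] bnd[OF \<open>f \<in> W\<close>] that] that by (simp add: P_def)
    then show ?thesis unfolding in_C_def by (intro bdd_aboveI2)
  qed
  have Csub: "fv.subspace {g. in_C T lam g}"
    unfolding fv.subspace_def
  proof (intro conjI ballI allI)
    show "0 \<in> {g. in_C T lam g}" by (auto simp: in_C_def intro: bdd_aboveI2[where M=0])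
    fix x y :: "real \<Rightarrow> real^'n" assume "x \<in> {g. in_C T lam g}" "y \<in> {g. in_C T lam g}"
    then have "in_C T lam (\<lambda>s. 1 *\<^sub>R x s + 1 *\<^sub>R y s)" by (intro inC_lin) auto
    then show "x + y \<in> {g. in_C T lam g}" by (simp add: plus_fun_def)
  next
    fix c :: real and x :: "real \<Rightarrow> real^'n" assume "x \<in> {g. in_C T lam g}"
    then have "in_C T lam (\<lambda>s. c *\<^sub>R x s + 0 *\<^sub>R x s)" by (intro inC_lin) auto
    then show "(\<lambda>xa. c *\<^sub>R x xa) \<in> {g. in_C T lam g}" by simp
  qed
  obtain B where B: "B \<subseteq> W" "fv.independent B" "W \<subseteq> fv.span B"
  proof -
    obtain B where "B \<subseteq> W" "fv.independent B" "W \<subseteq> fv.span B" "card B = fv.dim W"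
      by (rule fv.basis_exists)
    then show ?thesis using that by blast
  qed
  have mh: "module_hom (\<lambda>(r::real) (f::real \<Rightarrow> real^'n) x. r *\<^sub>R f x) (\<lambda>(r::real) (f::real \<Rightarrow> real^'n) x. r *\<^sub>R f x) (vp.construct B P)"
    using vp.linear_construct[OF B(2)] by (simp add: module_hom_iff_linear)
  have cadd: "vp.construct B P (x + y) = vp.construct B P x + vp.construct B P y" for x y
    by (rule module_hom.add[OF mh])
  have cscale: "vp.construct B P (\<lambda>s. r *\<^sub>R x s) = (\<lambda>s. r *\<^sub>R vp.construct B P x s)" for r x
    by (rule module_hom.scale[OF mh])
  have c0: "vp.construct B P 0 = 0" by (rule module_hom.zero[OF mh])
  have agree: "x \<in> W \<and> vp.construct B P x = P x" if "x \<in> fv.span B" for x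
    using that
  proof (induct rule: fv.span_induct_alt)
    case base
    then show ?case using W0 c0 P0 by (simp add: zero_fun_def)
  next
    case (step c x y)
    have xW: "x \<in> W" using step B by auto
    have eq: "(\<lambda>s. c *\<^sub>R x s) + y = (\<lambda>s. c *\<^sub>R x s + 1 *\<^sub>R y s)" by (simp add: fun_eq_iff)
    have "vp.construct B P ((\<lambda>s. c *\<^sub>R x s) + y) = (\<lambda>s. c *\<^sub>R P x s) + P y"
      using step cadd cscale vp.construct_basis[OF B(2) step(1)] by simp
    also have "\<dots> = P (\<lambda>s. c *\<^sub>R x s + 1 *\<^sub>R y s)" using Plin[OF xW, of y c 1] step by (simp add: fun_eq_iff)
    finally show ?case using eq Wlin[OF xW, of y c 1] step by simp
  qed
  define Lop where "Lop f = vp.construct B P (R f)" for f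
  have span_C: "fv.span (P ` B) \<subseteq> {g. in_C T lam g}"
    using PC B(1) by (intro fv.span_minimal Csub) auto
  show ?thesis
  proof (intro exI[of _ "m.CC + 1"] exI[of _ Lop] conjI allI impI ballI)
    show "0 < m.CC + 1" using m.Cc_nonneg by (simp add: m.CC_def add_nonneg_pos sum_nonneg)
  next
    fix f g :: "real \<Rightarrow> real^'n" and t assume "\<forall>t\<in>T. f t = g t" "t \<in> T"
    then have "R f = R g" by (auto simp: R_def fun_eq_iff)
    then show "Lop f t = Lop g t" by (simp add: Lop_def)
  next
    fix f g :: "real \<Rightarrow> real^'n" and a c :: real and t
    have "R (\<lambda>s. a *\<^sub>R f s + c *\<^sub>R g s) = (\<lambda>s. a *\<^sub>R R f s) + (\<lambda>s. c *\<^sub>R R g s)"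
      by (simp add: R_def fun_eq_iff)
    then show "Lop (\<lambda>s. a *\<^sub>R f s + c *\<^sub>R g s) t = a *\<^sub>R Lop f t + c *\<^sub>R Lop g t"
      by (simp add: Lop_def cadd cscale)
  next
    fix f :: "real \<Rightarrow> real^'n"
    show "in_C T lam (Lop f)"
      using vp.construct_in_span[OF B(2), of P "R f"] span_C unfolding Lop_def by auto
  next
    fix f :: "real \<Rightarrow> real^'n" assume f: "in_C T \<gamma> f \<and> rd_continuous T f"
    have RfT: "R f t = f t" if "t \<in> T" for t using that by (simp add: R_def)
    have RW: "R f \<in> W"
    proof -
      have "in_C T \<gamma> (R f)" using f inC_cong[where f=f and g="R f" and T=T and k=\<gamma>] RfT by auto
      moreover have "m.rdc (R f)" unfolding m.rdc_def
      proof (intro ballI impI)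
        fix t assume t: "t \<in> T" "sigma T t = t"
        have c: "continuous (at t within T) f" using f t
          by (auto simp: rd_continuous_def right_dense_def graininess_def)
        show "continuous (at t within T) (R f)" by (rule rdc_cong[OF _ t(1) c]) (simp add: RfT)
      qed
      ultimately show ?thesis unfolding W_def by (auto simp: R_def)
    qed
    have LP: "Lop f = P (R f)" using agree[of "R f"] RW B(3) by (auto simp: Lop_def)
    have LPsi: "Lop f t = m.Psi (R f) t" if "t \<in> T" for t using that by (simp add: LP P_def)
    show "solves_linear T A f (Lop f)" unfolding solves_linear_def
    proof
      fix t assume t: "t \<in> T"
      have "has_delta_derivative T (m.Psi (R f)) (A t *v m.Psi (R f) t + R f t) t"
        by (rule m.Psi_dd[OF rdcW[OF RW] bnd[OF RW] t])
      then have "has_delta_derivative T (Lop f) (A t *v m.Psi (R f) t + R f t) t"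
        using m.dd_cong[of "Lop f" "m.Psi (R f)", OF LPsi t] by simp
      then show "has_delta_derivative T (Lop f) (A t *v Lop f t + f t) t"
        using LPsi[OF t] RfT[OF t] by simp
    qed
    have Nw: "weighted_norm T \<gamma> (R f) = weighted_norm T \<gamma> f" by (rule wn_cong) (simp add: RfT)
    have N0: "0 \<le> weighted_norm T \<gamma> f" using wn_nonneg[where k=\<gamma> and f=f and t=0 and T=T] f z0 by simp
    show "weighted_norm T lam (Lop f) \<le> (m.CC + 1) * weighted_norm T \<gamma> f"
    proof (rule wn_least[OF Tne])
      fix t assume t: "t \<in> T"
      have "norm (Lop f t) * exp (lam * t) \<le> weighted_norm T \<gamma> (R f) * m.CC"
        using m.Psi_bound[OF rdcW[OF RW] bnd[OF RW] t] LPsi[OF t] by simp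
      also have "\<dots> \<le> (m.CC + 1) * weighted_norm T \<gamma> f" using N0 by (simp add: Nw algebra_simps)
      finally show "norm (Lop f t) * exp (lam * t) \<le> (m.CC + 1) * weighted_norm T \<gamma> f" .
    qed
  qed
qed


end
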